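(* The following statements are equivalent: (a) $\hat\beta_{AL}$ is pointwise consistent for $\beta$, i.e. for every $\beta\in\mathbb{R}^p$ and every $\epsilon>0$, $P_\beta(\|\hat\beta_{AL}-\beta\|>\epsilon)\to0$; (b) $\hat\beta_{AL}$ is uniformly consistent for $\beta$, i.e. for every $\epsilon>0$, $\sup_{\beta\in\mathbb{R}^p}P_\beta(\|\hat\beta_{AL}-\beta\|>\epsilon)\to0$; (c) $\lambda^*/n\to0$ as $n\to\infty$; (d) for every $\beta\in\mathbb{R}^p$ and every $j\in\mathcal{A}(\beta)$, $P_\beta(\hat\beta_{AL,j}=0)\to0$ as $n\to\infty$.
   Context: For each $n\ge p$: linear regression model $y=X\beta+\varepsilon$ with $y\in\mathbb{R}^n$, non-stochastic $X\in\mathbb{R}^{n\times p}$ ($p$ fixed) of full column rank, unknown $\beta\in\mathbb{R}^p$, and $\varepsilon$ with i.i.d. components of mean zero and finite variance $\sigma^2>0$; $P_\beta$ is the probability when the true parameter is $\beta$. $X'X/n\to C$ positive definite as $n\to\infty$. $\hat\beta_{LS}=(X'X)^{-1}X'y$; the events $\{\hat\beta_{LS,j}=0\}$ have probability zero and are excluded. Non-negative tuning parameters $\lambda_j=\lambda_{n,j}$, $\lambda^*=\max_j\lambda_j$. Adaptive Lasso: $\hat\beta_{AL}=\arg\min_{b\in\mathbb{R}^p}\big(\|y-Xb\|^2+2\sum_{j=1}^p\lambda_j|b_j|/|\hat\beta_{LS,j}|\big)$. The active set is $\mathcal{A}=\mathcal{A}(\beta)=\{j:\beta_j\neq0\}$.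 *)

theory Defs
  imports "HOL-Probability.Probability"
begin

text \<open>Design: X n i j is the (i,j) entry of the n x p design matrix (rows i < n),
  columns indexed by the finite type 'p, so p = CARD('p).
  Responses / errors are functions nat => real, only entries i < n matter.\<close>

definition XtX :: "(nat \<Rightarrow> nat \<Rightarrow> 'p::finite \<Rightarrow> real) \<Rightarrow> nat \<Rightarrow> real^'p^'p" where
  "XtX X n = (\<chi> j k. \<Sum>i<n. X n i j * X n i k)"

definition Xty :: "(nat \<Rightarrow> nat \<Rightarrow> 'p::finite \<Rightarrow> real) \<Rightarrow> nat \<Rightarrow> (nat \<Rightarrow> real) \<Rightarrow> real^'p" where
  "Xty X n y = (\<chi> j. \<Sum>i<n. X n i j * y i)"

definition lsq :: "(nat \<Rightarrow> nat \<Rightarrow> 'p::finite \<Rightarrow> real) \<Rightarrow> nat \<Rightarrow> (nat \<Rightarrow> real) \<Rightarrow> real^'p" where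
  "lsq X n y = matrix_inv (XtX X n) *v Xty X n y"

definition al_obj :: "(nat \<Rightarrow> nat \<Rightarrow> 'p::finite \<Rightarrow> real) \<Rightarrow> (nat \<Rightarrow> 'p \<Rightarrow> real) \<Rightarrow> nat
     \<Rightarrow> (nat \<Rightarrow> real) \<Rightarrow> real^'p \<Rightarrow> real" where
  "al_obj X lam n y b =
     (\<Sum>i<n. (y i - (\<Sum>j\<in>UNIV. X n i j * b $ j))\<^sup>2)
     + 2 * (\<Sum>j\<in>UNIV. lam n j * \<bar>b $ j\<bar> / \<bar>lsq X n y $ j\<bar>)"

definition alasso :: "(nat \<Rightarrow> nat \<Rightarrow> 'p::finite \<Rightarrow> real) \<Rightarrow> (nat \<Rightarrow> 'p \<Rightarrow> real) \<Rightarrow> nat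
     \<Rightarrow> (nat \<Rightarrow> real) \<Rightarrow> real^'p" where
  "alasso X lam n y = (THE b. \<forall>b'. al_obj X lam n y b \<le> al_obj X lam n y b')"

definition resp :: "(nat \<Rightarrow> nat \<Rightarrow> 'p::finite \<Rightarrow> real) \<Rightarrow> nat \<Rightarrow> real^'p \<Rightarrow> (nat \<Rightarrow> real) \<Rightarrow> nat \<Rightarrow> real" where
  "resp X n \<beta> eps = (\<lambda>i. (\<Sum>j\<in>UNIV. X n i j * \<beta> $ j) + eps i)"

definition errs :: "real measure \<Rightarrow> nat \<Rightarrow> (nat \<Rightarrow> real) measure" where
  "errs F n = PiM {..<n} (\<lambda>_. F)"

text \<open>P_beta(E) where E is an event described in terms of the response y.\<close>
definition Pb :: "real measure \<Rightarrow> (nat \<Rightarrow> nat \<Rightarrow> 'p::finite \<Rightarrow> real) \<Rightarrow> nat \<Rightarrow> real^'p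
     \<Rightarrow> ((nat \<Rightarrow> real) \<Rightarrow> bool) \<Rightarrow> real" where
  "Pb F X n \<beta> E = measure (errs F n) {eps \<in> space (errs F n). E (resp X n \<beta> eps)}"

definition lam_star :: "(nat \<Rightarrow> 'p::finite \<Rightarrow> real) \<Rightarrow> nat \<Rightarrow> real" where
  "lam_star lam n = Max (range (lam n))"

end

theory Submission
  imports Defs
begin

definition Phi :: "real^'p^'p \<Rightarrow> real^'p \<Rightarrow> real^'p \<Rightarrow> real^'p \<Rightarrow> real" where
  "Phi G z w b = b \<bullet> (G *v b) - 2 * (b \<bullet> z) + 2 * (\<Sum>j\<in>UNIV. \<bar>w$j\<bar> * \<bar>b$j\<bar>)"

definition amin :: "real^'p^'p \<Rightarrow> real^'p \<Rightarrow> real^'p \<Rightarrow> real^'p" where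
  "amin G z w = (THE b. \<forall>b'. Phi G z w b \<le> Phi G z w b')"

lemma lim_nonneg_aux:
  fixes X a :: real
  assumes "\<And>t. 0 < t \<Longrightarrow> t < 1 \<Longrightarrow> 0 \<le> X + t * a" "a \<ge> 0"
  shows "0 \<le> X"
proof (rule ccontr)
  assume "\<not> 0 \<le> X"
  define t where "t = min (1/2) (- X / (2 * (a + 1)))"
  have "- X / (2 * (a + 1)) > 0" using \<open>\<not> 0 \<le> X\<close> \<open>a\<ge>0\<close> by (intro divide_pos_pos) auto
  then have t0: "0 < t" "t < 1" by (auto simp: t_def)
  have "t * a \<le> (- X / (2 * (a + 1))) * a" using \<open>a\<ge>0\<close> by (intro mult_right_mono) (auto simp: t_def)
  also have "\<dots> < - X" using \<open>\<not> 0 \<le> X\<close> \<open>a\<ge>0\<close> mult_neg_pos[of X "a+2"]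
    by (simp add: field_simps algebra_simps)
  finally have "X + t * a < 0" by simp
  with assms(1)[OF t0] show False by simp
qed

lemma pen_convex:
  fixes w x y :: "real^'p"
  assumes "0 \<le> t" "t \<le> 1"
  shows "(\<Sum>j\<in>UNIV. \<bar>w$j\<bar> * \<bar>((1-t) *\<^sub>R x + t *\<^sub>R y)$j\<bar>) \<le>
         (1-t) * (\<Sum>j\<in>UNIV. \<bar>w$j\<bar> * \<bar>x$j\<bar>) + t * (\<Sum>j\<in>UNIV. \<bar>w$j\<bar> * \<bar>y$j\<bar>)"
proof -
  have "\<bar>w$j\<bar> * \<bar>((1-t) *\<^sub>R x + t *\<^sub>R y)$j\<bar> \<le> (1-t) * (\<bar>w$j\<bar> * \<bar>x$j\<bar>) + t * (\<bar>w$j\<bar> * \<bar>y$j\<bar>)" for j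
  proof -
    have "\<bar>((1-t) *\<^sub>R x + t *\<^sub>R y)$j\<bar> \<le> (1-t) * \<bar>x$j\<bar> + t * \<bar>y$j\<bar>"
      using assms by (simp add: abs_mult[symmetric]) (metis abs_mult abs_of_nonneg abs_triangle_ineq diff_ge_0_iff_ge)
    then show ?thesis by (metis (no_types, opaque_lifting) abs_ge_zero distrib_left mult.left_commute mult_left_mono)
  qed
  then show ?thesis by (simp add: sum_distrib_left sum.distrib[symmetric] sum_mono)
qed

lemma quad_expand:
  fixes G :: "real^'p^'p" and b d z :: "real^'p"
  shows "(b + t *\<^sub>R d) \<bullet> (G *v (b + t *\<^sub>R d)) - 2 * ((b + t *\<^sub>R d) \<bullet> z) =
     (b \<bullet> (G *v b) - 2 * (b \<bullet> z)) + t * (d \<bullet> (G *v b) + b \<bullet> (G *v d) - 2 * (d \<bullet> z)) + t\<^sup>2 * (d \<bullet> (G *v d))"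
  by (simp add: matrix_vector_right_distrib matrix_vector_mult_scaleR inner_add_left inner_add_right
       algebra_simps power2_eq_square)

lemma Phi_growth:
  fixes G :: "real^'p^'p"
  assumes psd: "\<And>v. 0 \<le> v \<bullet> (G *v v)"
    and mn: "\<And>b'. Phi G z w bs \<le> Phi G z w b'"
  shows "Phi G z w bs + (b - bs) \<bullet> (G *v (b - bs)) \<le> Phi G z w b"
proof -
  define d where "d = b - bs"
  define P where "P x = (\<Sum>j\<in>UNIV. \<bar>w$j\<bar> * \<bar>x$j\<bar>)" for x :: "real^'p"
  define B where "B = d \<bullet> (G *v bs) + bs \<bullet> (G *v d) - 2 * (d \<bullet> z)"
  define a where "a = d \<bullet> (G *v d)"
  have a0: "a \<ge> 0" using psd by (simp add: a_def)
  have PhiE: "Phi G z w (bs + t *\<^sub>R d) = (bs \<bullet> (G *v bs) - 2 * (bs \<bullet> z)) + t * B + t\<^sup>2 * a + 2 * P (bs + t *\<^sub>R d)" for t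
    unfolding Phi_def P_def B_def a_def using quad_expand[of bs t d G z] by simp
  have cvx: "P (bs + t *\<^sub>R d) \<le> (1-t) * P bs + t * P b" if "0 \<le> t" "t \<le> 1" for t
  proof -
    have "bs + t *\<^sub>R d = (1-t) *\<^sub>R bs + t *\<^sub>R b" by (simp add: d_def algebra_simps)
    then show ?thesis using pen_convex[OF that, of w bs b] by (simp add: P_def)
  qed
  have key: "0 \<le> (B + 2 * P b - 2 * P bs) + t * a" if "0 < t" "t < 1" for t
  proof -
    have "Phi G z w bs \<le> Phi G z w (bs + t *\<^sub>R d)" by (rule mn)
    also have "\<dots> \<le> (bs \<bullet> (G *v bs) - 2 * (bs \<bullet> z)) + t * B + t\<^sup>2 * a + 2 * ((1-t) * P bs + t * P b)"
      using cvx[of t] that by (simp add: PhiE)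
    finally have "0 \<le> t * B + t\<^sup>2 * a + 2 * t * P b - 2 * t * P bs"
      by (simp add: Phi_def P_def algebra_simps)
    then have "0 \<le> t * ((B + 2 * P b - 2 * P bs) + t * a)" by (simp add: algebra_simps power2_eq_square)
    then show ?thesis using that by (simp add: zero_le_mult_iff)
  qed
  have "0 \<le> B + 2 * P b - 2 * P bs" by (rule lim_nonneg_aux[OF key a0])
  moreover have "Phi G z w b = (bs \<bullet> (G *v bs) - 2 * (bs \<bullet> z)) + B + a + 2 * P b"
    using PhiE[of 1] by (simp add: d_def)
  moreover have "Phi G z w bs = (bs \<bullet> (G *v bs) - 2 * (bs \<bullet> z)) + 2 * P bs"
    by (simp add: Phi_def P_def)
  ultimately show ?thesis by (simp add: a_def d_def)
qed

lemma cont_mv: "continuous_on S (\<lambda>x. (G::real^'n^'m) *v x)"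
  by (intro linear_continuous_on matrix_vector_mul_bounded_linear)

lemma Phi_cont: "continuous_on S (Phi G z w)"
  unfolding Phi_def by (intro continuous_intros cont_mv)

lemma Phi_lower:
  assumes pd: "\<And>v. c * (norm v)\<^sup>2 \<le> v \<bullet> (G *v v)"
  shows "c * (norm b)\<^sup>2 - 2 * norm b * norm z \<le> Phi G z w b"
proof -
  have "b \<bullet> z \<le> norm b * norm z" by (rule norm_cauchy_schwarz)
  moreover have "0 \<le> (\<Sum>j\<in>UNIV. \<bar>w$j\<bar> * \<bar>b$j\<bar>)" by (simp add: sum_nonneg)
  ultimately show ?thesis using pd[of b] unfolding Phi_def by linarith
qed

lemma Phi_exists:
  assumes pd: "\<And>v. c * (norm v)\<^sup>2 \<le> v \<bullet> (G *v v)" and c: "c > 0"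
  shows "\<exists>b. \<forall>b'. Phi G z w b \<le> Phi G z w b'"
proof -
  define R where "R = 2 * norm z / c + 1"
  have R: "R > 0" using c by (simp add: R_def add_nonneg_pos)
  obtain b0 where b0: "b0 \<in> cball 0 R" "\<And>y. y \<in> cball 0 R \<Longrightarrow> Phi G z w b0 \<le> Phi G z w y"
    using continuous_attains_inf[OF compact_cball _ Phi_cont, of 0 R G z w] R by force
  have "Phi G z w b0 \<le> Phi G z w b'" for b'
  proof (cases "b' \<in> cball 0 R")
    case True then show ?thesis by (rule b0(2))
  next
    case False
    then have nb: "norm b' > R" by simp
    have "c * norm b' > 2 * norm z"
    proof -
      have "c * norm b' > c * R" using nb c by simp
      also have "c * R = 2 * norm z + c" using c by (simp add: R_def field_simps)
      finally show ?thesis using c by simp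
    qed
    then have "0 < norm b' * (c * norm b' - 2 * norm z)" using nb R by (intro mult_pos_pos) auto
    then have "0 < c * (norm b')\<^sup>2 - 2 * norm b' * norm z" by (simp add: algebra_simps power2_eq_square)
    also have "\<dots> \<le> Phi G z w b'" by (rule Phi_lower[OF pd])
    finally have "0 < Phi G z w b'" .
    moreover have "Phi G z w b0 \<le> Phi G z w 0" using b0(2)[of 0] R by simp
    moreover have "Phi G z w 0 = 0" by (simp add: Phi_def)
    ultimately show ?thesis by simp
  qed
  then show ?thesis by blast
qed

lemma Phi_unique:
  assumes pd: "\<And>v. c * (norm v)\<^sup>2 \<le> v \<bullet> (G *v v)" and c: "c > 0"
    and m1: "\<And>b'. Phi G z w b1 \<le> Phi G z w b'" and m2: "\<And>b'. Phi G z w b2 \<le> Phi G z w b'"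
  shows "b1 = b2"
proof -
  have psd: "0 \<le> v \<bullet> (G *v v)" for v using pd[of v] c by (smt (verit) zero_le_mult_iff zero_le_power2)
  have "Phi G z w b1 + (b2 - b1) \<bullet> (G *v (b2 - b1)) \<le> Phi G z w b2" by (rule Phi_growth[OF psd m1])
  then have "(b2 - b1) \<bullet> (G *v (b2 - b1)) \<le> 0" using m2[of b1] by simp
  then have "c * (norm (b2 - b1))\<^sup>2 \<le> 0" using pd[of "b2 - b1"] by simp
  then show ?thesis using c by (simp add: mult_le_0_iff)
qed

lemma amin_min:
  assumes pd: "\<And>v. c * (norm v)\<^sup>2 \<le> v \<bullet> (G *v v)" and c: "c > 0"
  shows "Phi G z w (amin G z w) \<le> Phi G z w b'"
proof -
  have "\<exists>!b. \<forall>b'. Phi G z w b \<le> Phi G z w b'"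
    using Phi_exists[OF pd c] Phi_unique[OF pd c] by blast
  from theI'[OF this] show ?thesis unfolding amin_def by blast
qed

lemma amin_lip:
  fixes G :: "real^'p^'p"
  assumes pd: "\<And>v. c * (norm v)\<^sup>2 \<le> v \<bullet> (G *v v)" and c: "c > 0"
  shows "norm (amin G z1 w1 - amin G z2 w2) \<le> (norm (z1 - z2) + real CARD('p) * norm (w1 - w2)) / c"
    (is "norm (?b1 - ?b2) \<le> _")
proof -
  have psd: "0 \<le> v \<bullet> (G *v v)" for v using pd[of v] c by (smt (verit) zero_le_mult_iff zero_le_power2)
  define d where "d = ?b2 - ?b1"
  have g1: "Phi G z1 w1 ?b1 + d \<bullet> (G *v d) \<le> Phi G z1 w1 ?b2"
    unfolding d_def by (rule Phi_growth[OF psd amin_min[OF pd c]])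
  have g2: "Phi G z2 w2 ?b2 + (-d) \<bullet> (G *v (-d)) \<le> Phi G z2 w2 ?b1"
    unfolding d_def minus_diff_eq by (rule Phi_growth[OF psd amin_min[OF pd c]])
  have dd: "(-d) \<bullet> (G *v (-d)) = d \<bullet> (G *v d)" by (simp add: vec.neg)
  have "2 * (d \<bullet> (G *v d)) \<le> (Phi G z1 w1 ?b2 - Phi G z2 w2 ?b2) - (Phi G z1 w1 ?b1 - Phi G z2 w2 ?b1)"
    using g1 g2 dd by linarith
  also have "\<dots> = -2 * (d \<bullet> (z1 - z2)) + 2 * (\<Sum>j\<in>UNIV. (\<bar>w1$j\<bar> - \<bar>w2$j\<bar>) * (\<bar>?b2$j\<bar> - \<bar>?b1$j\<bar>))"
    by (simp add: Phi_def d_def inner_diff_left inner_diff_right algebra_simps sum_subtractf sum.distrib)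
  also have "\<dots> \<le> 2 * (norm d * norm (z1 - z2)) + 2 * (\<Sum>j\<in>(UNIV::'p set). norm (w1 - w2) * norm d)"
  proof -
    have "- (d \<bullet> (z1 - z2)) \<le> norm d * norm (z1 - z2)"
      by (metis Cauchy_Schwarz_ineq2 abs_le_D2)
    moreover have cmp: "(\<bar>w1$j\<bar> - \<bar>w2$j\<bar>) * (\<bar>?b2$j\<bar> - \<bar>?b1$j\<bar>) \<le> norm (w1 - w2) * norm d" for j
    proof -
      have "(\<bar>w1$j\<bar> - \<bar>w2$j\<bar>) * (\<bar>?b2$j\<bar> - \<bar>?b1$j\<bar>) \<le> \<bar>(w1 - w2)$j\<bar> * \<bar>d$j\<bar>"
      proof -
        have "(\<bar>w1$j\<bar> - \<bar>w2$j\<bar>) * (\<bar>?b2$j\<bar> - \<bar>?b1$j\<bar>) \<le> \<bar>(\<bar>w1$j\<bar> - \<bar>w2$j\<bar>) * (\<bar>?b2$j\<bar> - \<bar>?b1$j\<bar>)\<bar>"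
          by (rule abs_ge_self)
        also have "\<dots> = \<bar>\<bar>w1$j\<bar> - \<bar>w2$j\<bar>\<bar> * \<bar>\<bar>?b2$j\<bar> - \<bar>?b1$j\<bar>\<bar>" by (rule abs_mult)
        also have "\<dots> \<le> \<bar>w1$j - w2$j\<bar> * \<bar>?b2$j - ?b1$j\<bar>"
          by (intro mult_mono abs_triangle_ineq3) auto
        finally show ?thesis by (simp add: d_def)
      qed
      also have "\<dots> \<le> norm (w1 - w2) * norm d"
        by (intro mult_mono component_le_norm_cart) auto
      finally show ?thesis .
    qed
    moreover have "(\<Sum>j\<in>UNIV. (\<bar>w1$j\<bar> - \<bar>w2$j\<bar>) * (\<bar>?b2$j\<bar> - \<bar>?b1$j\<bar>)) \<le> (\<Sum>j\<in>(UNIV::'p set). norm (w1 - w2) * norm d)"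
      by (intro sum_mono cmp)
    ultimately show ?thesis by linarith
  qed
  finally have "2 * (d \<bullet> (G *v d)) \<le> 2 * (norm d * (norm (z1 - z2) + real CARD('p) * norm (w1 - w2)))"
    by (simp add: algebra_simps)
  then have "c * (norm d)\<^sup>2 \<le> norm d * (norm (z1 - z2) + real CARD('p) * norm (w1 - w2))"
    using pd[of d] by simp
  then have "c * norm d \<le> norm (z1 - z2) + real CARD('p) * norm (w1 - w2)"
    by (cases "norm d = 0") (auto simp: power2_eq_square)
  then have "norm d \<le> (norm (z1 - z2) + real CARD('p) * norm (w1 - w2)) / c"
    using c by (simp add: field_simps)
  then show ?thesis by (simp add: d_def norm_minus_commute)
qed

lemma nfst: "norm (fst x) \<le> norm x" and nsnd: "norm (snd x) \<le> norm x"
  unfolding norm_prod_def by (auto intro!: real_le_rsqrt)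

lemma amin_cont:
  fixes G :: "real^'p^'p"
  assumes pd: "\<And>v. c * (norm v)\<^sup>2 \<le> v \<bullet> (G *v v)" and c: "c > 0"
  shows "continuous_on UNIV (\<lambda>x. amin G (fst x) (snd x :: real^'p))"
proof (rule lipschitz_on_continuous_on)
  show "((1 + real CARD('p)) / c)-lipschitz_on UNIV (\<lambda>x. amin G (fst x) (snd x :: real^'p))"
  proof (rule lipschitz_onI)
    fix x y :: "(real^'p) \<times> (real^'p)"
    have "norm (amin G (fst x) (snd x) - amin G (fst y) (snd y))
       \<le> (norm (fst x - fst y) + real CARD('p) * norm (snd x - snd y)) / c" by (rule amin_lip[OF pd c])
    also have "\<dots> \<le> (norm (x - y) + real CARD('p) * norm (x - y)) / c"
      using c by (intro divide_right_mono add_mono mult_left_mono)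
        (auto simp del: fst_diff snd_diff simp: fst_diff[symmetric] snd_diff[symmetric] nfst nsnd)
    also have "\<dots> = (1 + real CARD('p)) / c * norm (x - y)" by (simp add: algebra_simps)
    finally show "dist (amin G (fst x) (snd x)) (amin G (fst y) (snd y)) \<le> (1 + real CARD('p)) / c * dist x y"
      by (simp add: dist_norm)
  qed (use c in auto)
qed

definition wts :: "(nat \<Rightarrow> nat \<Rightarrow> 'p::finite \<Rightarrow> real) \<Rightarrow> (nat \<Rightarrow> 'p \<Rightarrow> real) \<Rightarrow> nat \<Rightarrow> (nat \<Rightarrow> real) \<Rightarrow> real^'p" where
  "wts X lam n y = (\<chi> j. lam n j / \<bar>lsq X n y $ j\<bar>)"

lemma XtX_nth: "XtX X n $ j $ k = (\<Sum>i<n. X n i j * X n i k)"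
  by (simp add: XtX_def)

lemma Xty_nth: "Xty X n y $ j = (\<Sum>i<n. X n i j * y i)"
  by (simp add: Xty_def)

lemma inner_Xty: "b \<bullet> Xty X n y = (\<Sum>i<n. y i * (\<Sum>j\<in>UNIV. X n i j * b $ j))"
proof -
  have "b \<bullet> Xty X n y = (\<Sum>j\<in>UNIV. b $ j * (\<Sum>i<n. X n i j * y i))"
    by (simp add: inner_vec_def Xty_nth)
  also have "\<dots> = (\<Sum>j\<in>UNIV. \<Sum>i<n. y i * (X n i j * b $ j))"
    by (simp add: sum_distrib_left algebra_simps)
  also have "\<dots> = (\<Sum>i<n. \<Sum>j\<in>UNIV. y i * (X n i j * b $ j))" by (rule sum.swap)
  also have "\<dots> = (\<Sum>i<n. y i * (\<Sum>j\<in>UNIV. X n i j * b $ j))" by (simp add: sum_distrib_left)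
  finally show ?thesis .
qed

lemma inner_XtX: "b \<bullet> (XtX X n *v v) = (\<Sum>i<n. (\<Sum>j\<in>UNIV. X n i j * b $ j) * (\<Sum>k\<in>UNIV. X n i k * v $ k))"
proof -
  have "b \<bullet> (XtX X n *v v) = (\<Sum>j\<in>UNIV. b $ j * (\<Sum>k\<in>UNIV. (\<Sum>i<n. X n i j * X n i k) * v $ k))"
    by (simp add: inner_vec_def matrix_vector_mult_def XtX_nth)
  also have "\<dots> = (\<Sum>j\<in>UNIV. \<Sum>k\<in>UNIV. \<Sum>i<n. (X n i j * b $ j) * (X n i k * v $ k))"
    by (simp add: sum_distrib_left sum_distrib_right algebra_simps)
  also have "\<dots> = (\<Sum>j\<in>UNIV. \<Sum>i<n. \<Sum>k\<in>UNIV. (X n i j * b $ j) * (X n i k * v $ k))"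
    by (simp add: sum.swap[of _ UNIV "{..<n}"])
  also have "\<dots> = (\<Sum>i<n. \<Sum>j\<in>UNIV. \<Sum>k\<in>UNIV. (X n i j * b $ j) * (X n i k * v $ k))"
    by (rule sum.swap)
  also have "\<dots> = (\<Sum>i<n. (\<Sum>j\<in>UNIV. X n i j * b $ j) * (\<Sum>k\<in>UNIV. X n i k * v $ k))"
    by (simp only: sum_product)
  finally show ?thesis .
qed

lemma XtX_sym: "b \<bullet> (XtX X n *v v) = v \<bullet> (XtX X n *v b)"
  unfolding inner_XtX by (simp add: mult.commute)

lemma XtX_psd: "0 \<le> v \<bullet> (XtX X n *v v)"
  unfolding inner_XtX by (simp add: sum_nonneg)

lemma al_obj_Phi:
  assumes lam: "\<And>n j. lam n j \<ge> 0"
  shows "al_obj X lam n y b = (\<Sum>i<n. (y i)\<^sup>2) + Phi (XtX X n) (Xty X n y) (wts X lam n y) b"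
proof -
  have sq: "(\<Sum>i<n. (y i - (\<Sum>j\<in>UNIV. X n i j * b $ j))\<^sup>2) =
     (\<Sum>i<n. (y i)\<^sup>2) - 2 * (\<Sum>i<n. y i * (\<Sum>j\<in>UNIV. X n i j * b $ j))
       + (\<Sum>i<n. (\<Sum>j\<in>UNIV. X n i j * b $ j) * (\<Sum>k\<in>UNIV. X n i k * b $ k))"
    by (simp add: power2_eq_square algebra_simps sum.distrib sum_subtractf sum_distrib_left)
  have pen: "(\<Sum>j\<in>UNIV. lam n j * \<bar>b $ j\<bar> / \<bar>lsq X n y $ j\<bar>) = (\<Sum>j\<in>UNIV. \<bar>wts X lam n y $ j\<bar> * \<bar>b $ j\<bar>)"
    using lam by (simp add: wts_def)
  show ?thesis unfolding al_obj_def Phi_def sq pen inner_Xty inner_XtX by simp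
qed

lemma alasso_amin:
  assumes lam: "\<And>n j. lam n j \<ge> 0"
  shows "alasso X lam n y = amin (XtX X n) (Xty X n y) (wts X lam n y)"
  unfolding alasso_def amin_def al_obj_Phi[OF lam] by simp

lemma alasso_min:
  assumes lam: "\<And>n j. lam n j \<ge> 0"
    and pd: "\<And>v. c * (norm v)\<^sup>2 \<le> v \<bullet> (XtX X n *v v)" and c: "c > 0"
  shows "al_obj X lam n y (alasso X lam n y) \<le> al_obj X lam n y b"
  unfolding al_obj_Phi[OF lam] alasso_amin[OF lam] using amin_min[OF pd c] by simp

lemma G_lsq:
  assumes pd: "\<And>v. c * (norm v)\<^sup>2 \<le> v \<bullet> (XtX X n *v v)" and c: "c > 0"
  shows "XtX X n *v lsq X n y = Xty X n y"
proof -
  let ?G = "XtX X n"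
  have "\<forall>x. ?G *v x = 0 \<longrightarrow> x = 0"
  proof (intro allI impI)
    fix x assume "?G *v x = 0"
    then have "c * (norm x)\<^sup>2 \<le> 0" using pd[of x] by simp
    then show "x = 0" using c by (simp add: mult_le_0_iff)
  qed
  then have "\<exists>B. B ** ?G = mat 1" by (simp add: matrix_left_invertible_ker)
  then have "invertible ?G" by (simp add: invertible_left_inverse)
  then have "?G ** matrix_inv ?G = mat 1 \<and> matrix_inv ?G ** ?G = mat 1"
    unfolding invertible_def matrix_inv_def by (rule someI_ex)
  then show ?thesis
    by (simp add: lsq_def matrix_vector_mul_assoc matrix_vector_mul_lid)
qed

lemma Xty_resp: "Xty X n (resp X n \<beta> eps) = XtX X n *v \<beta> + Xty X n eps"
proof -
  have "Xty X n (resp X n \<beta> eps) $ j = (XtX X n *v \<beta>) $ j + Xty X n eps $ j" for j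
  proof -
    have "Xty X n (resp X n \<beta> eps) $ j = (\<Sum>i<n. X n i j * (\<Sum>k\<in>UNIV. X n i k * \<beta> $ k)) + Xty X n eps $ j"
      by (simp add: Xty_nth resp_def algebra_simps sum.distrib)
    also have "(\<Sum>i<n. X n i j * (\<Sum>k\<in>UNIV. X n i k * \<beta> $ k)) = (XtX X n *v \<beta>) $ j"
      by (simp add: matrix_vector_mult_def XtX_nth sum_distrib_left sum_distrib_right sum.swap[of _ UNIV "{..<n}"] algebra_simps)
    finally show ?thesis .
  qed
  then show ?thesis by (simp add: vec_eq_iff)
qed

lemma G_bounds:
  fixes X :: "nat \<Rightarrow> nat \<Rightarrow> 'p::finite \<Rightarrow> real" and C :: "real^'p^'p"
  assumes C_lim: "(\<lambda>n. (1 / real n) *\<^sub>R XtX X n) \<longlonglongrightarrow> C"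
    and C_pd: "\<And>v. v \<noteq> 0 \<Longrightarrow> v \<bullet> (C *v v) > 0"
  shows "\<exists>c K. c > 0 \<and> K > 0 \<and> (\<forall>\<^sub>F n in sequentially. n > 0 \<and>
     (\<forall>v. c * real n * (norm v)\<^sup>2 \<le> v \<bullet> (XtX X n *v v)) \<and> (\<forall>v. norm (XtX X n *v v) \<le> K * real n * norm v))"
proof -
  have cq: "continuous_on (sphere 0 1) (\<lambda>u::real^'p. u \<bullet> (C *v u))"
    by (intro continuous_intros cont_mv)
  have ne: "sphere (0::real^'p) 1 \<noteq> {}"
  proof -
    have "axis undefined (1::real) \<in> sphere (0::real^'p) 1" by simp
    then show ?thesis by blast
  qed
  obtain u0 where u0: "u0 \<in> sphere 0 1" "\<And>u. u \<in> sphere 0 1 \<Longrightarrow> u0 \<bullet> (C *v u0) \<le> u \<bullet> (C *v u)"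
    using continuous_attains_inf[OF compact_sphere ne cq] by blast
  define c0 where "c0 = u0 \<bullet> (C *v u0)"
  have c0: "c0 > 0" unfolding c0_def using u0(1) by (intro C_pd) auto
  have lowC: "c0 * (norm v)\<^sup>2 \<le> v \<bullet> (C *v v)" for v
  proof (cases "v = 0")
    case True then show ?thesis by simp
  next
    case False
    define u where "u = (1 / norm v) *\<^sub>R v"
    have u: "u \<in> sphere 0 1" using False by (simp add: u_def)
    have v: "v = norm v *\<^sub>R u" using False by (simp add: u_def)
    have "v \<bullet> (C *v v) = (norm v)\<^sup>2 * (u \<bullet> (C *v u))"
      by (subst (1 2) v) (simp add: matrix_vector_mult_scaleR power2_eq_square)
    moreover have "c0 \<le> u \<bullet> (C *v u)" using u0(2)[OF u] by (simp add: c0_def)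
    ultimately show ?thesis by (metis mult.commute mult_right_mono zero_le_power2)
  qed
  define Gh where "Gh n = (1 / real n) *\<^sub>R XtX X n" for n
  define D where "D n = Gh n - C" for n
  define \<eta> where "\<eta> = c0 / (2 * real CARD('p) * real CARD('p))"
  have eta: "\<eta> > 0" using c0 by (simp add: \<eta>_def)
  have Dlim: "(\<lambda>n. D n) \<longlonglongrightarrow> 0" unfolding D_def Gh_def using C_lim by (simp add: LIM_zero)
  have "\<forall>\<^sub>F n in sequentially. \<forall>i j. \<bar>D n $ i $ j\<bar> < \<eta>"
  proof (intro eventually_all_finite allI)
    fix i j
    have "(\<lambda>n. D n $ i $ j) \<longlonglongrightarrow> 0" using tendsto_vec_nth[OF tendsto_vec_nth[OF Dlim]] by simp
    from tendstoD[OF this eta] show "\<forall>\<^sub>F n in sequentially. \<bar>D n $ i $ j\<bar> < \<eta>" by (simp add: dist_real_def)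
  qed
  moreover have "\<forall>\<^sub>F n in sequentially. n > 0" by (simp add: eventually_gt_at_top)
  ultimately have ev: "\<forall>\<^sub>F n in sequentially. n > 0 \<and> (\<forall>i j. \<bar>D n $ i $ j\<bar> < \<eta>)"
    by (simp add: eventually_conj_iff)
  define K where "K = onorm ((*v) C) + c0"
  have K: "K > 0" using c0 onorm_pos_le[OF matrix_vector_mul_bounded_linear[of C]] by (simp add: K_def)
  have "\<forall>\<^sub>F n in sequentially. n > 0 \<and>
     (\<forall>v. (c0/2) * real n * (norm v)\<^sup>2 \<le> v \<bullet> (XtX X n *v v)) \<and> (\<forall>v. norm (XtX X n *v v) \<le> K * real n * norm v)"
    using ev
  proof eventually_elim
    case (elim n)
    then have n: "n > 0" and Db: "\<And>i j. \<bar>D n $ i $ j\<bar> \<le> \<eta>" by (auto intro: less_imp_le)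
    have on: "onorm ((*v) (D n)) \<le> c0 / 2"
      using onorm_le_matrix_component[of "D n" \<eta>, OF Db] by (simp add: \<eta>_def)
    have Dv: "norm (D n *v v) \<le> c0 / 2 * norm v" for v
      using onorm[OF matrix_vector_mul_bounded_linear[of "D n"], of v] on
      by (meson mult_right_mono norm_ge_zero order_trans)
    have Cv: "norm (C *v v) \<le> onorm ((*v) C) * norm v" for v
      using onorm[OF matrix_vector_mul_bounded_linear[of C], of v] .
    have GG: "XtX X n *v v = real n *\<^sub>R (Gh n *v v)" for v
      using n by (simp add: Gh_def scaleR_matrix_vector_assoc[symmetric])
    have GhCD: "Gh n *v v = C *v v + D n *v v" for v
      by (simp add: D_def matrix_vector_mult_add_rdistrib[symmetric])
    have low: "(c0/2) * (norm v)\<^sup>2 \<le> v \<bullet> (Gh n *v v)" for v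
    proof -
      have "- (v \<bullet> (D n *v v)) \<le> norm v * norm (D n *v v)"
        by (metis Cauchy_Schwarz_ineq2 abs_le_D2)
      also have "\<dots> \<le> norm v * (c0 / 2 * norm v)" by (intro mult_left_mono Dv) auto
      also have "norm v * (c0 / 2 * norm v) = c0/2 * (norm v)\<^sup>2" by (simp add: power2_eq_square)
      finally have "- (v \<bullet> (D n *v v)) \<le> c0/2 * (norm v)\<^sup>2" .
      moreover have "v \<bullet> (Gh n *v v) = v \<bullet> (C *v v) + v \<bullet> (D n *v v)" by (simp add: GhCD inner_add_right)
      ultimately show ?thesis using lowC[of v] by linarith
    qed
    have up: "norm (Gh n *v v) \<le> K * norm v" for v
    proof -
      have "norm (Gh n *v v) \<le> norm (C *v v) + norm (D n *v v)" unfolding GhCD by (rule norm_triangle_ineq)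
      also have "\<dots> \<le> onorm ((*v) C) * norm v + c0 / 2 * norm v" by (intro add_mono Cv Dv)
      also have "\<dots> \<le> K * norm v" using c0 by (simp add: K_def algebra_simps)
      finally show ?thesis .
    qed
    show ?case
    proof (intro conjI allI)
      fix v
      show "c0 / 2 * real n * (norm v)\<^sup>2 \<le> v \<bullet> (XtX X n *v v)"
        using mult_left_mono[OF low[of v], of "real n"] by (simp add: GG algebra_simps)
      show "norm (XtX X n *v v) \<le> K * real n * norm v"
        using mult_left_mono[OF up[of v], of "real n"] by (simp add: GG algebra_simps)
    qed (rule n)
  qed
  then show ?thesis using c0 K by (intro exI[of _ "c0/2"] exI[of _ K]) auto
qed

lemma quad_shift:
  fixes L x :: "real^'p"
  shows "x \<bullet> (XtX X n *v x) - 2 * (x \<bullet> (XtX X n *v L)) = (x - L) \<bullet> (XtX X n *v (x - L)) - L \<bullet> (XtX X n *v L)"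
  using XtX_sym[of L X n x] by (simp add: matrix_vector_mult_diff_distrib inner_diff_left inner_diff_right)

lemma closeA:
  fixes X :: "nat \<Rightarrow> nat \<Rightarrow> 'p::finite \<Rightarrow> real"
  assumes lam: "\<And>n j. lam n j \<ge> 0"
    and pd: "\<And>v. a * (norm v)\<^sup>2 \<le> v \<bullet> (XtX X n *v v)" and a: "a > 0"
  shows "a * (norm (alasso X lam n y - lsq X n y))\<^sup>2 \<le> 2 * (\<Sum>j\<in>UNIV. lam n j)"
proof -
  let ?b = "alasso X lam n y" and ?L = "lsq X n y" and ?G = "XtX X n" and ?w = "wts X lam n y"
  define P where "P x = (\<Sum>j\<in>UNIV. \<bar>?w$j\<bar> * \<bar>x$j\<bar>)" for x :: "real^'p"
  have z: "Xty X n y = ?G *v ?L" using G_lsq[OF pd a] by simp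
  have "Phi ?G (Xty X n y) ?w ?b \<le> Phi ?G (Xty X n y) ?w ?L"
    using alasso_min[OF lam pd a, where y=y and b="?L"] by (simp add: al_obj_Phi[OF lam])
  then have "(?b - ?L) \<bullet> (?G *v (?b - ?L)) + 2 * P ?b \<le> 2 * P ?L"
    unfolding Phi_def z P_def using quad_shift[of ?b X n ?L] quad_shift[of ?L X n ?L] by simp
  moreover have "P ?L \<le> (\<Sum>j\<in>UNIV. lam n j)"
    unfolding P_def
  proof (rule sum_mono)
    fix j
    show "\<bar>?w$j\<bar> * \<bar>?L$j\<bar> \<le> lam n j"
      using lam[of n j] by (cases "?L$j = 0") (auto simp: wts_def)
  qed
  moreover have "0 \<le> P ?b" by (simp add: P_def sum_nonneg)
  ultimately show ?thesis using pd[of "?b - ?L"] by linarith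
qed

lemma deltaB:
  fixes X :: "nat \<Rightarrow> nat \<Rightarrow> 'p::finite \<Rightarrow> real"
  assumes pd: "\<And>v. a * (norm v)\<^sup>2 \<le> v \<bullet> (XtX X n *v v)" and a: "a > 0"
  shows "a * norm (lsq X n (resp X n \<beta> eps) - \<beta>) \<le> norm (Xty X n eps)"
proof -
  let ?L = "lsq X n (resp X n \<beta> eps)" and ?G = "XtX X n"
  have "?G *v ?L = ?G *v \<beta> + Xty X n eps" using G_lsq[OF pd a] Xty_resp by metis
  then have GL: "?G *v (?L - \<beta>) = Xty X n eps" by (simp add: matrix_vector_mult_diff_distrib)
  have "a * (norm (?L - \<beta>))\<^sup>2 \<le> (?L - \<beta>) \<bullet> Xty X n eps" using pd[of "?L - \<beta>"] GL by simp
  also have "\<dots> \<le> norm (?L - \<beta>) * norm (Xty X n eps)" by (rule norm_cauchy_schwarz)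
  finally have "a * (norm (?L - \<beta>))\<^sup>2 \<le> norm (?L - \<beta>) * norm (Xty X n eps)" .
  then show ?thesis
    by (cases "norm (?L - \<beta>) = 0") (auto simp: power2_eq_square mult.assoc[symmetric])
qed

lemma zeroing:
  fixes X :: "nat \<Rightarrow> nat \<Rightarrow> 'p::finite \<Rightarrow> real"
  assumes lam: "\<And>n j. lam n j \<ge> 0"
    and pd: "\<And>v. a * (norm v)\<^sup>2 \<le> v \<bullet> (XtX X n *v v)" and a: "a > 0"
    and up: "\<And>v. norm (XtX X n *v v) \<le> k * norm v" and k: "k \<ge> 0"
    and t: "t > 0" and close: "norm (lsq X n y - axis j t) \<le> t / 2"
    and lmax: "\<And>i. lam n i \<le> lam n j"
    and big: "lam n j > 9 * t\<^sup>2 * real CARD('p) * k\<^sup>2 / (2 * a)"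
  shows "alasso X lam n y $ j = 0"
proof (rule ccontr)
  let ?b = "alasso X lam n y" and ?L = "lsq X n y" and ?G = "XtX X n" and ?w = "wts X lam n y"
    and ?z = "Xty X n y"
  define s where "s = ?b $ j"
  define e where "e = (axis j 1 :: real^'p)"
  define P where "P x = (\<Sum>i\<in>UNIV. \<bar>?w$i\<bar> * \<bar>x$i\<bar>)" for x :: "real^'p"
  define wj where "wj = \<bar>?w $ j\<bar>"
  define A where "A = e \<bullet> (?G *v (?b - ?L))"
  assume "?b $ j \<noteq> 0"
  then have s0: "s \<noteq> 0" by (simp add: s_def)
  have z: "?z = ?G *v ?L" using G_lsq[OF pd a] by simp
  have Lj: "\<bar>?L $ j - t\<bar> \<le> t / 2"
    using component_le_norm_cart[of "?L - axis j t" j] close by simp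
  then have Ljpos: "?L $ j \<ge> t / 2" and Ljup: "\<bar>?L $ j\<bar> \<le> 3 * t / 2" using t by (auto simp: abs_if split: if_split_asm)
  have wj: "wj = lam n j / \<bar>?L $ j\<bar>" using lam[of n j] by (simp add: wj_def wts_def)
  have Gee: "0 \<le> e \<bullet> (?G *v e)" by (rule XtX_psd)
  have absA: "\<bar>A\<bar> \<le> norm (?G *v (?b - ?L))"
    unfolding A_def using Cauchy_Schwarz_ineq2[of e "?G *v (?b - ?L)"] by (simp add: e_def)
  have pert: "2 * wj \<le> 2 * \<bar>A\<bar> + \<tau> * (e \<bullet> (?G *v e))" if tau: "0 < \<tau>" "\<tau> \<le> \<bar>s\<bar>" for \<tau>
  proof -
    define u where "u = \<tau> * sgn s"
    define b' where "b' = ?b + (- u) *\<^sub>R e"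
    have b'i: "b' $ i = (if i = j then s - u else ?b $ i)" for i
      by (simp add: b'_def e_def s_def axis_def)
    have sabs: "\<bar>s - u\<bar> = \<bar>s\<bar> - \<tau>"
    proof (cases "s > 0")
      case True then show ?thesis using tau by (simp add: u_def)
    next
      case False then have "s < 0" using s0 by simp
      then show ?thesis using tau by (simp add: u_def)
    qed
    have Pb': "P b' = P ?b - wj * \<tau>"
    proof -
      have "\<bar>?w$i\<bar> * \<bar>b'$i\<bar> = \<bar>?w$i\<bar> * \<bar>?b$i\<bar> + (if i = j then - (wj * \<tau>) else 0)" for i
        using sabs by (auto simp: b'i wj_def s_def[symmetric] algebra_simps) (metis distrib_right)
      then have "P b' = P ?b + (\<Sum>i\<in>UNIV. (if i = j then - (wj * \<tau>) else 0))"
        by (simp add: P_def sum.distrib)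
      then show ?thesis by simp
    qed
    have "Phi ?G ?z ?w ?b \<le> Phi ?G ?z ?w b'"
      unfolding alasso_amin[OF lam] by (rule amin_min[OF pd a])
    moreover have "Phi ?G ?z ?w b' = (?b \<bullet> (?G *v ?b) - 2 * (?b \<bullet> ?z)) + (-u) * (e \<bullet> (?G *v ?b) + ?b \<bullet> (?G *v e) - 2 * (e \<bullet> ?z)) + (-u)\<^sup>2 * (e \<bullet> (?G *v e)) + 2 * P b'"
      unfolding Phi_def b'_def P_def using quad_expand[of "?b" "-u" e ?G ?z] by simp
    moreover have "Phi ?G ?z ?w ?b = (?b \<bullet> (?G *v ?b) - 2 * (?b \<bullet> ?z)) + 2 * P ?b"
      by (simp add: Phi_def P_def)
    moreover have "e \<bullet> (?G *v ?b) + ?b \<bullet> (?G *v e) - 2 * (e \<bullet> ?z) = 2 * A"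
      using XtX_sym[of ?b X n e] by (simp add: A_def z matrix_vector_mult_diff_distrib inner_diff_right)
    ultimately have h1: "0 \<le> (-u) * (2 * A) + u\<^sup>2 * (e \<bullet> (?G *v e)) - 2 * wj * \<tau>"
      using Pb' by simp
    have h2: "u\<^sup>2 = \<tau>\<^sup>2" using s0 by (cases "s > 0") (auto simp: u_def power_mult_distrib)
    have h3: "(-u) * A \<le> \<tau> * \<bar>A\<bar>"
    proof -
      have "\<tau> * (-A) \<le> \<tau> * \<bar>A\<bar>" "\<tau> * A \<le> \<tau> * \<bar>A\<bar>" using tau by (intro mult_left_mono; simp)+
      then show ?thesis using s0 by (cases "s > 0") (auto simp: u_def)
    qed
    have "(-u) * (2 * A) = 2 * ((-u) * A)" by simp
    moreover have "u\<^sup>2 * (e \<bullet> (?G *v e)) = \<tau>\<^sup>2 * (e \<bullet> (?G *v e))" using h2 by simp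
    ultimately have "0 \<le> 2 * (\<tau> * \<bar>A\<bar>) + \<tau>\<^sup>2 * (e \<bullet> (?G *v e)) - 2 * wj * \<tau>" using h1 h3 by linarith
    then have "0 \<le> \<tau> * (2 * \<bar>A\<bar> + \<tau> * (e \<bullet> (?G *v e)) - 2 * wj)"
      by (simp add: algebra_simps power2_eq_square)
    then show ?thesis using tau by (simp add: zero_le_mult_iff)
  qed
  have "0 \<le> (2 * \<bar>A\<bar> - 2 * wj) + t' * (\<bar>s\<bar> * (e \<bullet> (?G *v e)))" if "0 < t'" "t' < 1" for t'
    using pert[of "t' * \<bar>s\<bar>"] that s0 by (simp add: mult_le_cancel_right1 algebra_simps)
  moreover have "0 \<le> \<bar>s\<bar> * (e \<bullet> (?G *v e))" using Gee by simp
  ultimately have "0 \<le> 2 * \<bar>A\<bar> - 2 * wj" by (rule lim_nonneg_aux)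
  then have wjA: "wj \<le> norm (?G *v (?b - ?L))" using absA by linarith
  also have "\<dots> \<le> k * norm (?b - ?L)" by (rule up)
  finally have wjk: "wj \<le> k * norm (?b - ?L)" .
  have "a * (norm (?b - ?L))\<^sup>2 \<le> 2 * (\<Sum>i\<in>UNIV. lam n i)" by (rule closeA[OF lam pd a])
  also have "\<dots> \<le> 2 * (\<Sum>i\<in>(UNIV::'p set). lam n j)" by (intro mult_left_mono sum_mono lmax) auto
  finally have nb: "a * (norm (?b - ?L))\<^sup>2 \<le> 2 * real CARD('p) * lam n j" by simp
  have wj0: "0 \<le> wj" by (simp add: wj_def)
  have "wj\<^sup>2 \<le> (k * norm (?b - ?L))\<^sup>2" using wjk wj0 by (rule power_mono)
  also have "\<dots> = k\<^sup>2 * (norm (?b - ?L))\<^sup>2" by (simp add: power_mult_distrib)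
  also have "\<dots> \<le> k\<^sup>2 * (2 * real CARD('p) * lam n j / a)"
    using nb a by (intro mult_left_mono) (auto simp: field_simps)
  finally have w2: "wj\<^sup>2 \<le> k\<^sup>2 * (2 * real CARD('p) * lam n j / a)" .
  have lpos: "lam n j > 0" using big a by (smt (verit) divide_nonneg_pos zero_le_mult_iff zero_le_power2 of_nat_0_le_iff)
  have "2 * lam n j / (3 * t) \<le> wj"
    unfolding wj using Ljup Ljpos t lpos by (simp add: field_simps mult_left_mono)
  then have "(2 * lam n j / (3 * t))\<^sup>2 \<le> wj\<^sup>2" using lpos t by (intro power_mono) auto
  with w2 have "(2 * lam n j / (3 * t))\<^sup>2 \<le> k\<^sup>2 * (2 * real CARD('p) * lam n j / a)" by linarith
  then have "4 * (lam n j)\<^sup>2 * a \<le> 9 * t\<^sup>2 * (k\<^sup>2 * (2 * real CARD('p) * lam n j))"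
    using t a by (simp add: field_simps power2_eq_square)
  then have "lam n j * (4 * lam n j * a) \<le> lam n j * (18 * t\<^sup>2 * k\<^sup>2 * real CARD('p))"
    by (simp add: algebra_simps power2_eq_square)
  then have "4 * lam n j * a \<le> 18 * t\<^sup>2 * k\<^sup>2 * real CARD('p)" using lpos by simp
  then have "lam n j \<le> 9 * t\<^sup>2 * real CARD('p) * k\<^sup>2 / (2 * a)" using a by (simp add: field_simps)
  then show False using big by simp
qed

definition Sq :: "(nat \<Rightarrow> nat \<Rightarrow> 'p::finite \<Rightarrow> real) \<Rightarrow> nat \<Rightarrow> (nat \<Rightarrow> real) \<Rightarrow> real" where
  "Sq X n eps = (\<Sum>j\<in>UNIV. (\<Sum>i<n. X n i j * eps i)\<^sup>2)"

lemma Sq_norm: "(norm (Xty X n eps))\<^sup>2 = Sq X n eps"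
  unfolding power2_norm_eq_inner by (simp add: inner_vec_def Sq_def Xty_nth power2_eq_square)

lemma errs_prob: "prob_space F \<Longrightarrow> prob_space (errs F n)"
  unfolding errs_def by (rule prob_space_PiM)

lemma comp_meas: "sets F = sets borel \<Longrightarrow> i < n \<Longrightarrow> (\<lambda>x. x i) \<in> borel_measurable (errs F n)"
proof -
  assume FB: "sets F = sets borel" and i: "i < n"
  have "(\<lambda>x. x i) \<in> measurable (errs F n) F" unfolding errs_def
    by (rule measurable_component_singleton) (use i in simp)
  moreover have "measurable (errs F n) F = measurable (errs F n) borel"
    by (rule measurable_cong_sets[OF refl FB])
  ultimately show ?thesis by simp
qed

lemma prod_two:
  fixes g :: "nat \<Rightarrow> real"
  assumes "finite A" "i \<in> A" "k \<in> A"
  shows "(\<Prod>l\<in>A. if l \<in> {i, k} then g l else 1) = (\<Prod>l\<in>{i,k}. g l)"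
proof -
  have "{i,k} \<subseteq> A" using assms by auto
  then have "A \<inter> {i,k} = {i,k}" by auto
  then show ?thesis using prod.inter_restrict[OF assms(1), of g "{i,k}"] by simp
qed

lemma cross_moment:
  assumes F_prob: "prob_space F"
    and F_mean: "integrable F (\<lambda>x. x)" "(\<integral>x. x \<partial>F) = 0"
    and F_var: "integrable F (\<lambda>x. x\<^sup>2)"
    and ik: "i < n" "k < n"
  shows "integrable (errs F n) (\<lambda>x. x i * x k)"
    "(\<integral>x. x i * x k \<partial>errs F n) = (if i = k then (\<integral>x. x\<^sup>2 \<partial>F) else 0)"
proof -
  interpret P: product_prob_space "\<lambda>_::nat. F" "{..<n}"
    by (intro product_prob_space.intro product_sigma_finite.intro product_prob_space_axioms.intro
        prob_space_imp_sigma_finite F_prob)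
  interpret FP: prob_space F by (rule F_prob)
  define f where "f = (\<lambda>l (x::real). (if i = k then (if l = i then x\<^sup>2 else 1)
                             else (if l = i \<or> l = k then x else 1)))"
  have fint: "integrable F (f l)" for l
  proof -
    have "f l = (\<lambda>x. x\<^sup>2) \<or> f l = (\<lambda>x. x) \<or> f l = (\<lambda>x. 1)" by (cases "i = k"; cases "l = i"; cases "l = k") (auto simp: f_def)
    then show ?thesis using F_mean F_var by auto
  qed
  have prodf: "(\<Prod>l\<in>{..<n}. f l (x l)) = x i * x k" for x :: "nat \<Rightarrow> real"
  proof (cases "i = k")
    case True
    have "(\<Prod>l\<in>{..<n}. f l (x l)) = (\<Prod>l\<in>{..<n}. if l \<in> {i, k} then (x l)\<^sup>2 else 1)"
      using True by (intro prod.cong) (auto simp: f_def)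
    also have "\<dots> = (\<Prod>l\<in>{i,k}. (x l)\<^sup>2)" using ik by (intro prod_two) auto
    finally show ?thesis using True by (simp add: power2_eq_square)
  next
    case False
    have "(\<Prod>l\<in>{..<n}. f l (x l)) = (\<Prod>l\<in>{..<n}. if l \<in> {i, k} then x l else 1)"
      using False by (intro prod.cong) (auto simp: f_def)
    also have "\<dots> = (\<Prod>l\<in>{i,k}. x l)" using ik by (intro prod_two) auto
    finally show ?thesis using False by simp
  qed
  have "integrable (errs F n) (\<lambda>x. \<Prod>l\<in>{..<n}. f l (x l))"
    unfolding errs_def by (rule P.product_integrable_prod) (auto intro: fint)
  then show "integrable (errs F n) (\<lambda>x. x i * x k)" by (simp add: prodf)
  have "(\<integral>x. (\<Prod>l\<in>{..<n}. f l (x l)) \<partial>errs F n) = (\<Prod>l\<in>{..<n}. integral\<^sup>L F (f l))"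
    unfolding errs_def by (rule P.product_integral_prod) (auto intro: fint)
  also have "\<dots> = (if i = k then (\<integral>x. x\<^sup>2 \<partial>F) else 0)"
  proof (cases "i = k")
    case True
    have "(\<Prod>l\<in>{..<n}. integral\<^sup>L F (f l)) = (\<Prod>l\<in>{..<n}. if l \<in> {i} then (\<integral>x. x\<^sup>2 \<partial>F) else 1)"
      using True prob_space.prob_space[OF F_prob] by (intro prod.cong) (auto simp: f_def)
    also have "\<dots> = (\<integral>x. x\<^sup>2 \<partial>F)" using ik by (simp add: prod.inter_restrict Int_absorb1)
    finally show ?thesis using True by simp
  next
    case False
    have "integral\<^sup>L F (f i) = 0" using False F_mean by (simp add: f_def)
    then have "(\<Prod>l\<in>{..<n}. integral\<^sup>L F (f l)) = 0" using ik by (intro prod_zero) auto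
    then show ?thesis using False by simp
  qed
  finally show "(\<integral>x. x i * x k \<partial>errs F n) = (if i = k then (\<integral>x. x\<^sup>2 \<partial>F) else 0)"
    by (simp add: prodf)
qed

lemma lin_moment:
  assumes F_prob: "prob_space F"
    and F_mean: "integrable F (\<lambda>x. x)" "(\<integral>x. x \<partial>F) = 0"
    and F_var: "integrable F (\<lambda>x. x\<^sup>2)"
  shows "integrable (errs F n) (\<lambda>x. (\<Sum>i<n. a i * x i)\<^sup>2)"
    "(\<integral>x. (\<Sum>i<n. a i * x i)\<^sup>2 \<partial>errs F n) = (\<integral>x. x\<^sup>2 \<partial>F) * (\<Sum>i<n. (a i)\<^sup>2)"
proof -
  have eq: "(\<Sum>i<n. a i * x i)\<^sup>2 = (\<Sum>i<n. \<Sum>k<n. a i * a k * (x i * x k))" for x :: "nat \<Rightarrow> real"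
    by (simp add: power2_eq_square sum_product algebra_simps)
  have int: "integrable (errs F n) (\<lambda>x. a i * a k * (x i * x k))" if "i < n" "k < n" for i k
    using cross_moment(1)[OF assms that] by simp
  show "integrable (errs F n) (\<lambda>x. (\<Sum>i<n. a i * x i)\<^sup>2)"
    unfolding eq using int by (intro Bochner_Integration.integrable_sum) auto
  have "(\<integral>x. (\<Sum>i<n. a i * x i)\<^sup>2 \<partial>errs F n) = (\<Sum>i<n. \<Sum>k<n. \<integral>x. a i * a k * (x i * x k) \<partial>errs F n)"
    unfolding eq using int
    by (subst Bochner_Integration.integral_sum, (auto intro!: Bochner_Integration.integrable_sum)[1],
        intro sum.cong refl Bochner_Integration.integral_sum) auto
  also have "\<dots> = (\<Sum>i<n. \<Sum>k<n. a i * a k * (if i = k then (\<integral>x. x\<^sup>2 \<partial>F) else 0))"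
    using cross_moment(2)[OF assms] by (intro sum.cong refl) simp
  also have "\<dots> = (\<integral>x. x\<^sup>2 \<partial>F) * (\<Sum>i<n. (a i)\<^sup>2)"
    by (simp add: sum_distrib_left power2_eq_square algebra_simps if_distrib cong: if_cong)
  finally show "(\<integral>x. (\<Sum>i<n. a i * x i)\<^sup>2 \<partial>errs F n) = (\<integral>x. x\<^sup>2 \<partial>F) * (\<Sum>i<n. (a i)\<^sup>2)" .
qed

lemma Sq_meas: "sets F = sets borel \<Longrightarrow> Sq X n \<in> borel_measurable (errs F n)"
  unfolding Sq_def
  by (intro borel_measurable_sum borel_measurable_power borel_measurable_times borel_measurable_const)
     (auto intro: comp_meas)

lemma tail_bound:
  assumes F_prob: "prob_space F" and F_borel: "sets F = sets borel"
    and F_mean: "integrable F (\<lambda>x. x)" "(\<integral>x. x \<partial>F) = 0"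
    and F_var: "integrable F (\<lambda>x. x\<^sup>2)"
    and r: "r > 0"
  shows "measure (errs F n) {x \<in> space (errs F n). r \<le> Sq X n x}
     \<le> (\<integral>x. x\<^sup>2 \<partial>F) * (\<Sum>j\<in>UNIV. XtX X n $ j $ j) / r"
proof -
  have int: "integrable (errs F n) (Sq X n)"
    unfolding Sq_def using lin_moment(1)[OF F_prob F_mean F_var] by (intro Bochner_Integration.integrable_sum) auto
  have "integral\<^sup>L (errs F n) (Sq X n) = (\<Sum>j\<in>UNIV. (\<integral>x. x\<^sup>2 \<partial>F) * (\<Sum>i<n. (X n i j)\<^sup>2))"
    unfolding Sq_def using lin_moment[OF F_prob F_mean F_var]
    by (subst Bochner_Integration.integral_sum) auto
  also have "\<dots> = (\<integral>x. x\<^sup>2 \<partial>F) * (\<Sum>j\<in>UNIV. XtX X n $ j $ j)"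
    by (simp add: XtX_nth sum_distrib_left power2_eq_square)
  finally have I: "integral\<^sup>L (errs F n) (Sq X n) = (\<integral>x. x\<^sup>2 \<partial>F) * (\<Sum>j\<in>UNIV. XtX X n $ j $ j)" .
  have "measure (errs F n) {x \<in> space (errs F n). Sq X n x \<ge> r} \<le> integral\<^sup>L (errs F n) (Sq X n) / r"
    by (rule integral_Markov_inequality_measure[OF int _ _ r, where A="space (errs F n)"])
       (auto simp: Sq_def sum_nonneg)
  then show ?thesis by (simp add: I)
qed

lemma vec_meas:
  fixes f :: "'a \<Rightarrow> real^'p::finite"
  assumes "\<And>j. (\<lambda>x. f x $ j) \<in> borel_measurable M"
  shows "f \<in> borel_measurable M"
proof (subst borel_measurable_euclidean_space, intro ballI)
  fix i :: "real^'p" assume "i \<in> Basis"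
  then obtain j where i: "i = axis j 1" using axis_inverse by blast
  show "(\<lambda>x. f x \<bullet> i) \<in> borel_measurable M" unfolding i inner_axis using assms[of j] by simp
qed

lemma vec_nth_meas:
  fixes f :: "'a \<Rightarrow> real^'p::finite"
  assumes "f \<in> borel_measurable M"
  shows "(\<lambda>x. f x $ j) \<in> borel_measurable M"
  unfolding cart_eq_inner_axis using assms by measurable

lemma Xty_resp_meas:
  assumes FB: "sets F = sets borel"
  shows "(\<lambda>eps. Xty X n (resp X n \<beta> eps)) \<in> borel_measurable (errs F n)"
proof (rule vec_meas)
  fix j
  show "(\<lambda>x. Xty X n (resp X n \<beta> x) $ j) \<in> borel_measurable (errs F n)"
    unfolding Xty_nth resp_def
    by (intro borel_measurable_sum borel_measurable_times borel_measurable_add borel_measurable_const)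
       (auto intro: comp_meas[OF FB])
qed

lemma lsq_resp_meas:
  assumes FB: "sets F = sets borel"
  shows "(\<lambda>eps. lsq X n (resp X n \<beta> eps)) \<in> borel_measurable (errs F n)"
  unfolding lsq_def by (rule borel_measurable_continuous_on[OF cont_mv Xty_resp_meas[OF FB]])

lemma wts_resp_meas:
  assumes FB: "sets F = sets borel"
  shows "(\<lambda>eps. wts X lam n (resp X n \<beta> eps)) \<in> borel_measurable (errs F n)"
proof (rule vec_meas)
  fix j
  have "(\<lambda>x. lsq X n (resp X n \<beta> x) $ j) \<in> borel_measurable (errs F n)"
    by (rule vec_nth_meas[OF lsq_resp_meas[OF FB]])
  then show "(\<lambda>x. wts X lam n (resp X n \<beta> x) $ j) \<in> borel_measurable (errs F n)"
    unfolding wts_def by simp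
qed

lemma alasso_resp_meas:
  assumes lam: "\<And>n j. lam n j \<ge> 0" and FB: "sets F = sets borel"
    and pd: "\<And>v. a * (norm v)\<^sup>2 \<le> v \<bullet> (XtX X n *v v)" and a: "a > 0"
  shows "(\<lambda>eps. alasso X lam n (resp X n \<beta> eps)) \<in> borel_measurable (errs F n)"
  unfolding alasso_amin[OF lam]
  by (rule borel_measurable_continuous_Pair[OF Xty_resp_meas[OF FB] wts_resp_meas[OF FB] amin_cont[OF pd a]])

lemma freq_contra:
  fixes b f :: "nat \<Rightarrow> real"
  assumes fr: "frequently (\<lambda>n. 1 - b n \<le> f n) sequentially" and b: "b \<longlonglongrightarrow> 0" and f: "f \<longlonglongrightarrow> 0"
  shows False
proof -
  have "\<forall>\<^sub>F n in sequentially. b n < 1/2" using order_tendstoD(2)[OF b, of "1/2"] by simp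
  moreover have "\<forall>\<^sub>F n in sequentially. f n < 1/2" using order_tendstoD(2)[OF f, of "1/2"] by simp
  ultimately have "\<forall>\<^sub>F n in sequentially. \<not> (1 - b n \<le> f n)"
    by eventually_elim simp
  with fr show False by (simp add: frequently_def)
qed

lemma trace_bound:
  fixes X :: "nat \<Rightarrow> nat \<Rightarrow> 'p::finite \<Rightarrow> real"
  assumes up: "\<And>v. norm (XtX X n *v v) \<le> k * norm v"
  shows "(\<Sum>j\<in>UNIV. XtX X n $ j $ j) \<le> real CARD('p) * k"
proof -
  have "XtX X n $ j $ j \<le> k" for j
  proof -
    have "(XtX X n *v axis j 1) $ j = XtX X n $ j $ j"
      by (simp add: matrix_vector_mult_def axis_def if_distrib cong: if_cong)
    then have "XtX X n $ j $ j \<le> norm (XtX X n *v axis j 1)"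
      using component_le_norm_cart[of "XtX X n *v axis j 1" j] by simp
    also have "\<dots> \<le> k" using up[of "axis j 1"] by simp
    finally show ?thesis .
  qed
  then have "(\<Sum>j\<in>UNIV. XtX X n $ j $ j) \<le> (\<Sum>j\<in>(UNIV::'p set). k)" by (intro sum_mono) auto
  then show ?thesis by simp
qed

lemma LSB_n:
  fixes X :: "nat \<Rightarrow> nat \<Rightarrow> 'p::finite \<Rightarrow> real"
  assumes F_prob: "prob_space F" and F_borel: "sets F = sets borel"
    and F_mean: "integrable F (\<lambda>x. x)" "(\<integral>x. x \<partial>F) = 0"
    and F_var: "integrable F (\<lambda>x. x\<^sup>2)"
    and n: "n > 0" and c: "c > 0"
    and pd: "\<And>v. c * real n * (norm v)\<^sup>2 \<le> v \<bullet> (XtX X n *v v)"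
    and up: "\<And>v. norm (XtX X n *v v) \<le> K * real n * norm v"
    and eta: "\<eta> > 0"
    and hE: "\<And>eps. E (resp X n \<beta> eps) \<Longrightarrow> \<eta> \<le> norm (lsq X n (resp X n \<beta> eps) - \<beta>)"
  shows "Pb F X n \<beta> E \<le> (\<integral>x. x\<^sup>2 \<partial>F) * real CARD('p) * K / (c\<^sup>2 * \<eta>\<^sup>2 * real n)"
proof -
  interpret PS: prob_space "errs F n" by (rule errs_prob[OF F_prob])
  have cn: "c * real n > 0" using c n by simp
  define S where "S = {eps \<in> space (errs F n). (c * real n * \<eta>)\<^sup>2 \<le> Sq X n eps}"
  have [measurable]: "Sq X n \<in> borel_measurable (errs F n)" by (rule Sq_meas[OF F_borel])
  have Smeas: "S \<in> sets (errs F n)" unfolding S_def by measurable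
  have sub: "{eps \<in> space (errs F n). E (resp X n \<beta> eps)} \<subseteq> S"
  proof
    fix eps assume "eps \<in> {eps \<in> space (errs F n). E (resp X n \<beta> eps)}"
    then have sp: "eps \<in> space (errs F n)" and e: "E (resp X n \<beta> eps)" by auto
    have "c * real n * \<eta> \<le> c * real n * norm (lsq X n (resp X n \<beta> eps) - \<beta>)"
      using hE[OF e] cn by (intro mult_left_mono) auto
    also have "\<dots> \<le> norm (Xty X n eps)" by (rule deltaB[OF pd cn])
    finally have "(c * real n * \<eta>)\<^sup>2 \<le> (norm (Xty X n eps))\<^sup>2"
      using cn eta by (intro power_mono) auto
    then show "eps \<in> S" using sp by (simp add: S_def Sq_norm)
  qed
  have "Pb F X n \<beta> E \<le> measure (errs F n) S"
    unfolding Pb_def by (rule PS.finite_measure_mono[OF sub Smeas])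
  also have "\<dots> \<le> (\<integral>x. x\<^sup>2 \<partial>F) * (\<Sum>j\<in>UNIV. XtX X n $ j $ j) / (c * real n * \<eta>)\<^sup>2"
    unfolding S_def using cn eta n c by (intro tail_bound[OF F_prob F_borel F_mean F_var]) simp
  also have "\<dots> \<le> (\<integral>x. x\<^sup>2 \<partial>F) * (real CARD('p) * (K * real n)) / (c * real n * \<eta>)\<^sup>2"
  proof -
    have "(\<Sum>j\<in>UNIV. XtX X n $ j $ j) \<le> real CARD('p) * (K * real n)"
      by (rule trace_bound) (use up in \<open>simp add: mult.assoc\<close>)
    moreover have "0 \<le> (\<integral>x. x\<^sup>2 \<partial>F)" by (rule integral_nonneg_AE) simp
    ultimately show ?thesis using cn eta by (intro divide_right_mono mult_left_mono) auto
  qed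
  also have "\<dots> = (\<integral>x. x\<^sup>2 \<partial>F) * real CARD('p) * K / (c\<^sup>2 * \<eta>\<^sup>2 * real n)"
    using n c eta by (simp add: field_simps power2_eq_square)
  finally show ?thesis .
qed

lemma lam_star_ge: "lam n j \<le> lam_star lam n"
  unfolding lam_star_def by (rule Max_ge) auto

lemma lam_star_in: "\<exists>j. lam n j = lam_star lam n"
proof -
  have "lam_star lam n \<in> range (lam n)" unfolding lam_star_def by (rule Max_in) auto
  then show ?thesis by auto
qed

lemma lam_sum_le:
  fixes lam :: "nat \<Rightarrow> 'p::finite \<Rightarrow> real"
  shows "(\<Sum>j\<in>UNIV. lam n j) \<le> real CARD('p) * lam_star lam n"
proof -
  have "(\<Sum>j\<in>UNIV. lam n j) \<le> (\<Sum>j\<in>(UNIV::'p set). lam_star lam n)" by (rule sum_mono) (rule lam_star_ge)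
  then show ?thesis by simp
qed

lemma CORE_n:
  fixes X :: "nat \<Rightarrow> nat \<Rightarrow> 'p::finite \<Rightarrow> real"
  assumes F_prob: "prob_space F" and F_borel: "sets F = sets borel"
    and F_mean: "integrable F (\<lambda>x. x)" "(\<integral>x. x \<partial>F) = 0"
    and F_var: "integrable F (\<lambda>x. x\<^sup>2)"
    and lam: "\<And>n j. lam n j \<ge> 0"
    and n: "n > 0" and c: "c > 0"
    and pd: "\<And>v. c * real n * (norm v)\<^sup>2 \<le> v \<bullet> (XtX X n *v v)"
    and up: "\<And>v. norm (XtX X n *v v) \<le> K * real n * norm v"
    and eps: "\<epsilon> > 0"
    and small: "2 * real CARD('p) * lam_star lam n / (c * real n) \<le> (\<epsilon>/2)\<^sup>2"
    and hE: "\<And>y. E y \<Longrightarrow> \<epsilon> < norm (alasso X lam n y - \<beta>)"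
  shows "Pb F X n \<beta> E \<le> (\<integral>x. x\<^sup>2 \<partial>F) * real CARD('p) * K / (c\<^sup>2 * (\<epsilon>/2)\<^sup>2 * real n)"
proof (rule LSB_n[OF F_prob F_borel F_mean F_var n c pd up])
  show "\<epsilon>/2 > 0" using eps by simp
  fix e assume "E (resp X n \<beta> e)"
  let ?y = "resp X n \<beta> e"
  let ?b = "alasso X lam n ?y" and ?L = "lsq X n ?y"
  have cn: "c * real n > 0" using c n by simp
  have "c * real n * (norm (?b - ?L))\<^sup>2 \<le> 2 * (\<Sum>j\<in>UNIV. lam n j)" by (rule closeA[OF lam pd cn])
  also have "\<dots> \<le> 2 * (real CARD('p) * lam_star lam n)" using lam_sum_le by simp
  finally have "(norm (?b - ?L))\<^sup>2 \<le> 2 * real CARD('p) * lam_star lam n / (c * real n)"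
    using cn by (simp add: field_simps)
  also have "\<dots> \<le> (\<epsilon>/2)\<^sup>2" by (rule small)
  finally have "(norm (?b - ?L))\<^sup>2 \<le> (\<epsilon>/2)\<^sup>2" .
  then have bL: "norm (?b - ?L) \<le> \<epsilon>/2" by (rule power2_le_imp_le) (use eps in simp)
  have "\<epsilon> < norm (?b - \<beta>)" by (rule hE) fact
  also have "norm (?b - \<beta>) \<le> norm (?b - ?L) + norm (?L - \<beta>)"
    by (metis diff_add_cancel norm_triangle_ineq add_diff_eq)
  finally show "\<epsilon>/2 \<le> norm (?L - \<beta>)" using bL by linarith
qed

lemma REV_n:
  fixes X :: "nat \<Rightarrow> nat \<Rightarrow> 'p::finite \<Rightarrow> real"
  assumes F_prob: "prob_space F" and F_borel: "sets F = sets borel"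
    and F_mean: "integrable F (\<lambda>x. x)" "(\<integral>x. x \<partial>F) = 0"
    and F_var: "integrable F (\<lambda>x. x\<^sup>2)"
    and lam: "\<And>n j. lam n j \<ge> 0"
    and n: "n > 0" and c: "c > 0" and K: "K > 0"
    and pd: "\<And>v. c * real n * (norm v)\<^sup>2 \<le> v \<bullet> (XtX X n *v v)"
    and up: "\<And>v. norm (XtX X n *v v) \<le> K * real n * norm v"
    and t: "t > 0"
    and lmax: "\<And>i. lam n i \<le> lam n j"
    and big: "lam n j > 9 * t\<^sup>2 * real CARD('p) * (K * real n)\<^sup>2 / (2 * (c * real n))"
  shows "1 - (\<integral>x. x\<^sup>2 \<partial>F) * real CARD('p) * K / (c\<^sup>2 * (t/2)\<^sup>2 * real n)
            \<le> Pb F X n (axis j t) (\<lambda>y. alasso X lam n y $ j = 0)"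
    "1 - (\<integral>x. x\<^sup>2 \<partial>F) * real CARD('p) * K / (c\<^sup>2 * (t/2)\<^sup>2 * real n)
            \<le> Pb F X n (axis j t) (\<lambda>y. t/2 < norm (alasso X lam n y - axis j t))"
proof -
  interpret PS: prob_space "errs F n" by (rule errs_prob[OF F_prob])
  let ?\<beta> = "axis j t"
  let ?Bd = "(\<integral>x. x\<^sup>2 \<partial>F) * real CARD('p) * K / (c\<^sup>2 * (t/2)\<^sup>2 * real n)"
  have cn: "c * real n > 0" using c n by simp
  have Kn: "K * real n \<ge> 0" using K n by simp
  define Lset where "Lset = {e \<in> space (errs F n). t/2 \<le> norm (lsq X n (resp X n ?\<beta> e) - ?\<beta>)}"
  define A where "A = space (errs F n) - Lset"
  have [measurable]: "(\<lambda>e. lsq X n (resp X n ?\<beta> e)) \<in> borel_measurable (errs F n)"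
    by (rule lsq_resp_meas[OF F_borel])
  have [measurable]: "(\<lambda>e. alasso X lam n (resp X n ?\<beta> e)) \<in> borel_measurable (errs F n)"
    by (rule alasso_resp_meas[OF lam F_borel pd cn])
  have [measurable]: "(\<lambda>e. alasso X lam n (resp X n ?\<beta> e) $ j) \<in> borel_measurable (errs F n)"
    by (rule vec_nth_meas) measurable
  have Lmeas: "Lset \<in> sets (errs F n)" unfolding Lset_def by measurable
  have PL: "measure (errs F n) Lset \<le> ?Bd"
    unfolding Lset_def using LSB_n[OF F_prob F_borel F_mean F_var n c pd up, of "t/2" "\<lambda>y. t/2 \<le> norm (lsq X n y - ?\<beta>)" ?\<beta>] t
    by (simp add: Pb_def)
  have PA: "measure (errs F n) A = 1 - measure (errs F n) Lset"
    unfolding A_def by (rule PS.prob_compl[OF Lmeas])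
  have zero: "alasso X lam n (resp X n ?\<beta> e) $ j = 0" if "e \<in> A" for e
  proof -
    have close: "norm (lsq X n (resp X n ?\<beta> e) - ?\<beta>) \<le> t / 2" using that by (auto simp: A_def Lset_def)
    show ?thesis by (rule zeroing[where lam=lam and X=X and n=n, OF lam pd cn up Kn t close lmax big])
  qed
  have E1meas: "{e \<in> space (errs F n). alasso X lam n (resp X n ?\<beta> e) $ j = 0} \<in> sets (errs F n)"
    by measurable
  have E2meas: "{e \<in> space (errs F n). t/2 < norm (alasso X lam n (resp X n ?\<beta> e) - ?\<beta>)} \<in> sets (errs F n)"
    by measurable
  have sub1: "A \<subseteq> {e \<in> space (errs F n). alasso X lam n (resp X n ?\<beta> e) $ j = 0}"
    using zero by (auto simp: A_def)
  have sub2: "A \<subseteq> {e \<in> space (errs F n). t/2 < norm (alasso X lam n (resp X n ?\<beta> e) - ?\<beta>)}"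
  proof
    fix e assume eA: "e \<in> A"
    have "\<bar>(alasso X lam n (resp X n ?\<beta> e) - ?\<beta>) $ j\<bar> \<le> norm (alasso X lam n (resp X n ?\<beta> e) - ?\<beta>)"
      by (rule component_le_norm_cart)
    moreover have "(alasso X lam n (resp X n ?\<beta> e) - ?\<beta>) $ j = - t" using zero[OF eA] by simp
    ultimately show "e \<in> {e \<in> space (errs F n). t/2 < norm (alasso X lam n (resp X n ?\<beta> e) - ?\<beta>)}"
      using eA t by (auto simp: A_def)
  qed
  have "1 - ?Bd \<le> measure (errs F n) A" using PA PL by simp
  then show "1 - ?Bd \<le> Pb F X n ?\<beta> (\<lambda>y. alasso X lam n y $ j = 0)"
    "1 - ?Bd \<le> Pb F X n ?\<beta> (\<lambda>y. t/2 < norm (alasso X lam n y - ?\<beta>))"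
    unfolding Pb_def using PS.finite_measure_mono[OF sub1 E1meas] PS.finite_measure_mono[OF sub2 E2meas]
    by linarith+
qed

theorem theorem1:
  fixes F :: "real measure"
    and X :: "nat \<Rightarrow> nat \<Rightarrow> 'p::finite \<Rightarrow> real"
    and C :: "real^'p^'p"
    and lam :: "nat \<Rightarrow> 'p \<Rightarrow> real"
  assumes F_prob: "prob_space F"
    and F_borel: "sets F = sets borel"
    and F_mean: "integrable F (\<lambda>x. x)" "(\<integral>x. x \<partial>F) = 0"
    and F_var: "integrable F (\<lambda>x. x\<^sup>2)" "(\<integral>x. x\<^sup>2 \<partial>F) > 0"
    and full_rank: "\<And>n v. n \<ge> CARD('p) \<Longrightarrow>
                       (\<forall>i<n. (\<Sum>j\<in>UNIV. X n i j * v $ j) = 0) \<Longrightarrow> v = 0"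
    and C_lim: "(\<lambda>n. (1 / real n) *\<^sub>R XtX X n) \<longlonglongrightarrow> C"
    and C_pd: "\<And>v. v \<noteq> 0 \<Longrightarrow> v \<bullet> (C *v v) > 0"
    and lam_nonneg: "\<And>n j. lam n j \<ge> 0"
    and LS_nonzero: "\<And>n \<beta> j. n \<ge> CARD('p) \<Longrightarrow> Pb F X n \<beta> (\<lambda>y. lsq X n y $ j = 0) = 0"
  shows
   "((\<forall>\<beta>. \<forall>\<epsilon>>0. (\<lambda>n. Pb F X n \<beta> (\<lambda>y. norm (alasso X lam n y - \<beta>) > \<epsilon>)) \<longlonglongrightarrow> 0)
      \<longleftrightarrow> (\<forall>\<epsilon>>0. (\<lambda>n. SUP \<beta>. Pb F X n \<beta> (\<lambda>y. norm (alasso X lam n y - \<beta>) > \<epsilon>)) \<longlonglongrightarrow> 0))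
    \<and> ((\<forall>\<epsilon>>0. (\<lambda>n. SUP \<beta>. Pb F X n \<beta> (\<lambda>y. norm (alasso X lam n y - \<beta>) > \<epsilon>)) \<longlonglongrightarrow> 0)
      \<longleftrightarrow> (\<lambda>n. lam_star lam n / real n) \<longlonglongrightarrow> 0)
    \<and> ((\<lambda>n. lam_star lam n / real n) \<longlonglongrightarrow> 0
      \<longleftrightarrow> (\<forall>\<beta>. \<forall>j. \<beta> $ j \<noteq> 0 \<longrightarrow> (\<lambda>n. Pb F X n \<beta> (\<lambda>y. alasso X lam n y $ j = 0)) \<longlonglongrightarrow> 0))"
proof -
  define \<sigma>2 where "\<sigma>2 = (\<integral>x. x\<^sup>2 \<partial>F)"
  define p where "p = real CARD('p)"
  have p: "p > 0" by (simp add: p_def)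
  obtain c K where c: "c > 0" and K: "K > 0" and EV: "\<forall>\<^sub>F n in sequentially. n > 0 \<and>
     (\<forall>v. c * real n * (norm v)\<^sup>2 \<le> v \<bullet> (XtX X n *v v)) \<and> (\<forall>v. norm (XtX X n *v v) \<le> K * real n * norm v)"
    using G_bounds[OF C_lim C_pd] by blast
  define Bd where "Bd \<eta> n = \<sigma>2 * p * K / (c\<^sup>2 * \<eta>\<^sup>2 * real n)" for \<eta> :: real and n :: nat
  have Bd_lim: "(\<lambda>n. Bd \<eta> n) \<longlonglongrightarrow> 0" for \<eta>
  proof -
    have "(\<lambda>n. (\<sigma>2 * p * K / (c\<^sup>2 * \<eta>\<^sup>2)) * inverse (real n)) \<longlonglongrightarrow> (\<sigma>2 * p * K / (c\<^sup>2 * \<eta>\<^sup>2)) * 0"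
      by (intro tendsto_mult tendsto_const lim_inverse_n)
    moreover have "Bd \<eta> n = (\<sigma>2 * p * K / (c\<^sup>2 * \<eta>\<^sup>2)) * inverse (real n)" for n
      by (simp add: Bd_def divide_inverse inverse_mult_distrib mult_ac)
    ultimately show ?thesis by simp
  qed
  have Pb0: "0 \<le> Pb F X n \<beta> E" for n \<beta> E by (simp add: Pb_def)
  have Pb1: "Pb F X n \<beta> E \<le> 1" for n \<beta> E
    unfolding Pb_def using prob_space.prob_le_1[OF errs_prob[OF F_prob]] by blast
  have bdd: "bdd_above (range (\<lambda>\<beta>. Pb F X n \<beta> (E \<beta>)))" for n E
    by (rule bdd_aboveI[of _ 1]) (auto intro: Pb1)
  have core: "\<forall>\<^sub>F n in sequentially. \<forall>\<beta> E. (\<forall>y. E y \<longrightarrow> \<epsilon> < norm (alasso X lam n y - \<beta>))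
                 \<longrightarrow> Pb F X n \<beta> E \<le> Bd (\<epsilon>/2) n"
    if Cc: "(\<lambda>n. lam_star lam n / real n) \<longlonglongrightarrow> 0" and eps: "\<epsilon> > 0" for \<epsilon>
  proof -
    have "(\<lambda>n. 2 * p / c * (lam_star lam n / real n)) \<longlonglongrightarrow> 2 * p / c * 0"
      by (intro tendsto_mult tendsto_const Cc)
    then have "\<forall>\<^sub>F n in sequentially. 2 * p / c * (lam_star lam n / real n) < (\<epsilon>/2)\<^sup>2"
      using eps by (intro order_tendstoD(2)) auto
    with EV show ?thesis
    proof eventually_elim
      case (elim n)
      then have n: "n > 0" and pd: "\<And>v. c * real n * (norm v)\<^sup>2 \<le> v \<bullet> (XtX X n *v v)"
        and up: "\<And>v. norm (XtX X n *v v) \<le> K * real n * norm v" by auto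
      have eq: "2 * p / c * (lam_star lam n / real n) = 2 * real CARD('p) * lam_star lam n / (c * real n)"
        by (simp add: p_def)
      have small: "2 * real CARD('p) * lam_star lam n / (c * real n) \<le> (\<epsilon>/2)\<^sup>2"
      proof -
        have "2 * p / c * (lam_star lam n / real n) < (\<epsilon>/2)\<^sup>2" using elim by blast
        then show ?thesis using eq by linarith
      qed
      show ?case
      proof (intro allI impI)
        fix \<beta> E assume hE: "\<forall>y. E y \<longrightarrow> \<epsilon> < norm (alasso X lam n y - \<beta>)"
        show "Pb F X n \<beta> E \<le> Bd (\<epsilon>/2) n" unfolding Bd_def \<sigma>2_def p_def
          by (rule CORE_n[where lam=lam and X=X and n=n and \<beta>=\<beta> and E=E,
                OF F_prob F_borel F_mean(1,2) F_var(1) lam_nonneg n c pd up eps small])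
             (use hE in auto)
      qed
    qed
  qed
  have C_B: "\<forall>\<epsilon>>0. (\<lambda>n. SUP \<beta>. Pb F X n \<beta> (\<lambda>y. norm (alasso X lam n y - \<beta>) > \<epsilon>)) \<longlonglongrightarrow> 0"
    if Cc: "(\<lambda>n. lam_star lam n / real n) \<longlonglongrightarrow> 0"
  proof (intro allI impI)
    fix \<epsilon> :: real assume eps: "\<epsilon> > 0"
    have ev: "\<forall>\<^sub>F n in sequentially. \<forall>\<beta> E. (\<forall>y. E y \<longrightarrow> \<epsilon> < norm (alasso X lam n y - \<beta>))
                 \<longrightarrow> Pb F X n \<beta> E \<le> Bd (\<epsilon>/2) n" by (rule core[OF Cc eps])
    show "(\<lambda>n. SUP \<beta>. Pb F X n \<beta> (\<lambda>y. norm (alasso X lam n y - \<beta>) > \<epsilon>)) \<longlonglongrightarrow> 0"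
    proof (rule tendsto_sandwich[OF _ _ tendsto_const Bd_lim])
      show "\<forall>\<^sub>F n in sequentially. 0 \<le> (SUP \<beta>. Pb F X n \<beta> (\<lambda>y. norm (alasso X lam n y - \<beta>) > \<epsilon>))"
      proof (rule always_eventually, rule allI)
        fix n
        have "0 \<le> Pb F X n 0 (\<lambda>y. norm (alasso X lam n y - 0) > \<epsilon>)" by (rule Pb0)
        also have "\<dots> \<le> (SUP \<beta>. Pb F X n \<beta> (\<lambda>y. norm (alasso X lam n y - \<beta>) > \<epsilon>))"
          by (rule cSUP_upper[OF UNIV_I bdd])
        finally show "0 \<le> (SUP \<beta>. Pb F X n \<beta> (\<lambda>y. norm (alasso X lam n y - \<beta>) > \<epsilon>))" .
      qed
      show "\<forall>\<^sub>F n in sequentially. (SUP \<beta>. Pb F X n \<beta> (\<lambda>y. norm (alasso X lam n y - \<beta>) > \<epsilon>)) \<le> Bd (\<epsilon>/2) n"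
        using ev
      proof eventually_elim
        case (elim n)
        show ?case
        proof (rule cSUP_least)
          fix \<beta> :: "real^'p"
          show "Pb F X n \<beta> (\<lambda>y. norm (alasso X lam n y - \<beta>) > \<epsilon>) \<le> Bd (\<epsilon>/2) n"
            by (rule elim[rule_format]) simp
        qed simp
      qed
    qed
  qed
  have B_A: "\<forall>\<beta>. \<forall>\<epsilon>>0. (\<lambda>n. Pb F X n \<beta> (\<lambda>y. norm (alasso X lam n y - \<beta>) > \<epsilon>)) \<longlonglongrightarrow> 0"
    if B: "\<forall>\<epsilon>>0. (\<lambda>n. SUP \<beta>. Pb F X n \<beta> (\<lambda>y. norm (alasso X lam n y - \<beta>) > \<epsilon>)) \<longlonglongrightarrow> 0"
  proof (intro allI impI)
    fix \<beta> and \<epsilon> :: real assume eps: "\<epsilon> > 0"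
    show "(\<lambda>n. Pb F X n \<beta> (\<lambda>y. norm (alasso X lam n y - \<beta>) > \<epsilon>)) \<longlonglongrightarrow> 0"
    proof (rule tendsto_sandwich[OF _ _ tendsto_const B[rule_format, OF eps]])
      show "\<forall>\<^sub>F n in sequentially. 0 \<le> Pb F X n \<beta> (\<lambda>y. norm (alasso X lam n y - \<beta>) > \<epsilon>)"
        by (intro always_eventually allI Pb0)
      show "\<forall>\<^sub>F n in sequentially. Pb F X n \<beta> (\<lambda>y. norm (alasso X lam n y - \<beta>) > \<epsilon>)
              \<le> (SUP \<beta>. Pb F X n \<beta> (\<lambda>y. norm (alasso X lam n y - \<beta>) > \<epsilon>))"
        by (intro always_eventually allI cSUP_upper[OF UNIV_I bdd])
    qed
  qed
  have C_D: "\<forall>\<beta>. \<forall>j. \<beta> $ j \<noteq> 0 \<longrightarrow> (\<lambda>n. Pb F X n \<beta> (\<lambda>y. alasso X lam n y $ j = 0)) \<longlonglongrightarrow> 0"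
    if Cc: "(\<lambda>n. lam_star lam n / real n) \<longlonglongrightarrow> 0"
  proof (intro allI impI)
    fix \<beta> :: "real^'p" and j assume bj: "\<beta> $ j \<noteq> 0"
    define \<epsilon> where "\<epsilon> = \<bar>\<beta> $ j\<bar> / 2"
    have eps: "\<epsilon> > 0" using bj by (simp add: \<epsilon>_def)
    have hE: "\<forall>y. alasso X lam n y $ j = 0 \<longrightarrow> \<epsilon> < norm (alasso X lam n y - \<beta>)" for n
    proof (intro allI impI)
      fix y assume "alasso X lam n y $ j = 0"
      then have "\<bar>(alasso X lam n y - \<beta>) $ j\<bar> = \<bar>\<beta> $ j\<bar>" by simp
      moreover have "\<bar>(alasso X lam n y - \<beta>) $ j\<bar> \<le> norm (alasso X lam n y - \<beta>)" by (rule component_le_norm_cart)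
      ultimately show "\<epsilon> < norm (alasso X lam n y - \<beta>)" using bj by (simp add: \<epsilon>_def)
    qed
    have ev: "\<forall>\<^sub>F n in sequentially. \<forall>\<beta> E. (\<forall>y. E y \<longrightarrow> \<epsilon> < norm (alasso X lam n y - \<beta>))
                 \<longrightarrow> Pb F X n \<beta> E \<le> Bd (\<epsilon>/2) n" by (rule core[OF Cc eps])
    show "(\<lambda>n. Pb F X n \<beta> (\<lambda>y. alasso X lam n y $ j = 0)) \<longlonglongrightarrow> 0"
    proof (rule tendsto_sandwich[OF _ _ tendsto_const Bd_lim])
      show "\<forall>\<^sub>F n in sequentially. 0 \<le> Pb F X n \<beta> (\<lambda>y. alasso X lam n y $ j = 0)"
        by (intro always_eventually allI Pb0)
      show "\<forall>\<^sub>F n in sequentially. Pb F X n \<beta> (\<lambda>y. alasso X lam n y $ j = 0) \<le> Bd (\<epsilon>/2) n"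
        using ev
      proof eventually_elim
        case (elim n)
        show ?case by (rule elim[rule_format]) (use hE[of n] in blast)
      qed
    qed
  qed
  have notC: "\<not> (\<forall>\<beta>. \<forall>\<epsilon>>0. (\<lambda>n. Pb F X n \<beta> (\<lambda>y. norm (alasso X lam n y - \<beta>) > \<epsilon>)) \<longlonglongrightarrow> 0)
     \<and> \<not> (\<forall>\<beta>. \<forall>j. \<beta> $ j \<noteq> 0 \<longrightarrow> (\<lambda>n. Pb F X n \<beta> (\<lambda>y. alasso X lam n y $ j = 0)) \<longlonglongrightarrow> 0)"
    if nC: "\<not> (\<lambda>n. lam_star lam n / real n) \<longlonglongrightarrow> 0"
  proof -
    have lnn: "0 \<le> lam_star lam n / real n" for n
      using lam_star_ge[of lam n undefined] lam_nonneg[of n undefined] by simp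
    have "\<exists>r>0. frequently (\<lambda>n. r \<le> lam_star lam n / real n) sequentially"
    proof (rule ccontr)
      assume "\<not> (\<exists>r>0. frequently (\<lambda>n. r \<le> lam_star lam n / real n) sequentially)"
      note nex = this
      have ev: "\<forall>\<^sub>F n in sequentially. lam_star lam n / real n < r" if "r > 0" for r
      proof -
        have "\<not> frequently (\<lambda>n. r \<le> lam_star lam n / real n) sequentially" using that nex by blast
        then show ?thesis unfolding not_frequently by (simp add: not_le)
      qed
      have "(\<lambda>n. lam_star lam n / real n) \<longlonglongrightarrow> 0"
      proof (rule order_tendstoI)
        fix a :: real assume "a < 0"
        then show "\<forall>\<^sub>F n in sequentially. a < lam_star lam n / real n"
          using lnn by (intro always_eventually allI) (meson less_le_trans)
      next
        fix a :: real assume "0 < a" then show "\<forall>\<^sub>F n in sequentially. lam_star lam n / real n < a" by (rule ev)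
      qed
      with nC show False by simp
    qed
    then obtain r where r: "r > 0" and fr: "frequently (\<lambda>n. r \<le> lam_star lam n / real n) sequentially"
      by blast
    have fr2: "frequently (\<lambda>n. \<exists>j. lam n j = lam_star lam n \<and> r \<le> lam_star lam n / real n) sequentially"
      using fr by (rule frequently_elim1) (use lam_star_in in blast)
    have "\<exists>j. frequently (\<lambda>n. lam n j = lam_star lam n \<and> r \<le> lam_star lam n / real n) sequentially"
    proof (rule ccontr)
      assume "\<not> (\<exists>j. frequently (\<lambda>n. lam n j = lam_star lam n \<and> r \<le> lam_star lam n / real n) sequentially)"
      then have "\<forall>j. \<forall>\<^sub>F n in sequentially. \<not> (lam n j = lam_star lam n \<and> r \<le> lam_star lam n / real n)"
        by (simp add: not_frequently)
      then have "\<forall>\<^sub>F n in sequentially. \<forall>j. \<not> (lam n j = lam_star lam n \<and> r \<le> lam_star lam n / real n)"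
        by (simp only: eventually_all_finite)
      then have "\<forall>\<^sub>F n in sequentially. \<not> (\<exists>j. lam n j = lam_star lam n \<and> r \<le> lam_star lam n / real n)"
        by (rule eventually_mono) blast
      then have "\<not> frequently (\<lambda>n. \<exists>j. lam n j = lam_star lam n \<and> r \<le> lam_star lam n / real n) sequentially"
        by (simp only: not_frequently)
      with fr2 show False by simp
    qed
    then obtain j where fj: "frequently (\<lambda>n. lam n j = lam_star lam n \<and> r \<le> lam_star lam n / real n) sequentially"
      by blast
    define t where "t = sqrt (r * c / (9 * p * K\<^sup>2))"
    have tq: "r * c / (9 * p * K\<^sup>2) > 0" using r c p K by simp
    have t: "t > 0" using tq by (simp add: t_def)
    have t2: "t\<^sup>2 = r * c / (9 * p * K\<^sup>2)" using tq by (simp add: t_def)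
    define \<beta> where "\<beta> = (axis j t :: real^'p)"
    have frB: "frequently (\<lambda>n. 1 - Bd (t/2) n \<le> Pb F X n \<beta> (\<lambda>y. alasso X lam n y $ j = 0)
               \<and> 1 - Bd (t/2) n \<le> Pb F X n \<beta> (\<lambda>y. norm (alasso X lam n y - \<beta>) > t/2)) sequentially"
      using fj
    proof (rule frequently_rev_mp)
      show "\<forall>\<^sub>F n in sequentially. (lam n j = lam_star lam n \<and> r \<le> lam_star lam n / real n) \<longrightarrow>
           (1 - Bd (t/2) n \<le> Pb F X n \<beta> (\<lambda>y. alasso X lam n y $ j = 0)
               \<and> 1 - Bd (t/2) n \<le> Pb F X n \<beta> (\<lambda>y. norm (alasso X lam n y - \<beta>) > t/2))"
        using EV
      proof eventually_elim
        case (elim n)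
        then have n: "n > 0" and pd: "\<And>v. c * real n * (norm v)\<^sup>2 \<le> v \<bullet> (XtX X n *v v)"
          and up: "\<And>v. norm (XtX X n *v v) \<le> K * real n * norm v" by auto
        show ?case
        proof
          assume h: "lam n j = lam_star lam n \<and> r \<le> lam_star lam n / real n"
          have lmax: "\<And>i. lam n i \<le> lam n j" using h lam_star_ge by metis
          have "r * real n \<le> lam_star lam n" using h n by (simp add: le_divide_eq)
          moreover have "9 * t\<^sup>2 * real CARD('p) * (K * real n)\<^sup>2 / (2 * (c * real n)) = r * real n / 2"
          proof -
            have e1: "t\<^sup>2 * (9 * p * K\<^sup>2) = r * c" using t2 p K by simp
            have "9 * t\<^sup>2 * real CARD('p) * (K * real n)\<^sup>2 = (t\<^sup>2 * (9 * p * K\<^sup>2)) * (real n)\<^sup>2"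
              by (simp add: p_def power_mult_distrib mult_ac)
            also have "\<dots> = r * c * (real n)\<^sup>2" by (simp add: e1)
            finally show ?thesis using n c by (simp add: field_simps power2_eq_square)
          qed
          moreover have "r * real n / 2 < r * real n" using r n by simp
          ultimately have big: "lam n j > 9 * t\<^sup>2 * real CARD('p) * (K * real n)\<^sup>2 / (2 * (c * real n))"
            using h by linarith
          show "1 - Bd (t/2) n \<le> Pb F X n \<beta> (\<lambda>y. alasso X lam n y $ j = 0)
               \<and> 1 - Bd (t/2) n \<le> Pb F X n \<beta> (\<lambda>y. norm (alasso X lam n y - \<beta>) > t/2)"
            unfolding Bd_def \<sigma>2_def p_def \<beta>_def
            using REV_n[where lam=lam and X=X and n=n and j=j,
                OF F_prob F_borel F_mean(1,2) F_var(1) lam_nonneg n c K pd up t lmax big]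
            by simp
        qed
      qed
    qed
    show ?thesis
    proof
      show "\<not> (\<forall>\<beta>. \<forall>\<epsilon>>0. (\<lambda>n. Pb F X n \<beta> (\<lambda>y. norm (alasso X lam n y - \<beta>) > \<epsilon>)) \<longlonglongrightarrow> 0)"
      proof
        assume A: "\<forall>\<beta>. \<forall>\<epsilon>>0. (\<lambda>n. Pb F X n \<beta> (\<lambda>y. norm (alasso X lam n y - \<beta>) > \<epsilon>)) \<longlonglongrightarrow> 0"
        have L: "(\<lambda>n. Pb F X n \<beta> (\<lambda>y. norm (alasso X lam n y - \<beta>) > t/2)) \<longlonglongrightarrow> 0"
        proof -
          have h2: "t/2 > 0" using t by simp
          show ?thesis using A h2 by blast
        qed
        have Fr: "frequently (\<lambda>n. 1 - Bd (t/2) n \<le> Pb F X n \<beta> (\<lambda>y. norm (alasso X lam n y - \<beta>) > t/2)) sequentially"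
          using frB by (rule frequently_elim1) simp
        show False by (rule freq_contra[OF Fr Bd_lim L])
      qed
      show "\<not> (\<forall>\<beta>. \<forall>j. \<beta> $ j \<noteq> 0 \<longrightarrow> (\<lambda>n. Pb F X n \<beta> (\<lambda>y. alasso X lam n y $ j = 0)) \<longlonglongrightarrow> 0)"
      proof
        assume D: "\<forall>\<beta>. \<forall>j. \<beta> $ j \<noteq> 0 \<longrightarrow> (\<lambda>n. Pb F X n \<beta> (\<lambda>y. alasso X lam n y $ j = 0)) \<longlonglongrightarrow> 0"
        have "\<beta> $ j \<noteq> 0" using t by (simp add: \<beta>_def)
        then have L: "(\<lambda>n. Pb F X n \<beta> (\<lambda>y. alasso X lam n y $ j = 0)) \<longlonglongrightarrow> 0" using D by blast
        have Fr: "frequently (\<lambda>n. 1 - Bd (t/2) n \<le> Pb F X n \<beta> (\<lambda>y. alasso X lam n y $ j = 0)) sequentially"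
          using frB by (rule frequently_elim1) simp
        show False by (rule freq_contra[OF Fr Bd_lim L])
      qed
    qed
  qed
  show ?thesis using C_B B_A C_D notC by blast
qed

end
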